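(* Under any stationary policy $v$, the Markov chain $\{X_t\}$ has a single aperiodic communicating class $\widetilde S$ containing $\theta=[0,\dots,0]$ (possibly together with some transient states), and restricted to $\widetilde S$ the chain is geometrically ergodic. Moreover, letting $\pi$ denote its unique stationary distribution and $\tau_\theta := \min\{t\ge 0: X_t=\theta\}$: (1) there exists $a>0$ such that for every $x\ne\theta$, $\mathbb{E}[e^{a\tau_\theta}\mid X_0=x]\le K_x<\infty$ for some constant $K_x$, uniformly in $v$; (2) for every $f$ with $f = O(\Phi)$, $\mathbb{E}[f(X_t)]\to \sum_y \pi(y) f(y)$ exponentially fast, uniformly in $v$; in fact there are $K>0$ and $0<\eta<1$ with $\left|\mathbb{E}[f(X_t)\mid X_0=x] - \sum_y \pi(y)f(y)\right| \le K\left(1+\sum_i e^{a x_i}\right)\eta^t$ for $x=[x_1,\dots,x_I]$; (3) $\sup \mathbb{E}\left[\sum_i X^i_t\right]<\infty$, where the supremum is over all stationary policies and the expectation is with respect to the corresponding stationary distributions; in particular these stationary distributions form a compact (tight) set of probability measures; (4) $\sup \mathbb{E}\left[\sum_{t=0}^{\tau_\theta} \sum_i X^i_t\right] < \infty$, with the supremum as in (3).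
   Context: Processor sharing model: a single Bernoulli arrival process $\{\xi_t\}$ ($\xi_t\in\{0,1\}$ i.i.d., $P(\xi_t=1)=p\in(0,1)$). There are $I$ queues with lengths $X^i_t\in\mathcal N:=\{0,1,2,\dots\}$ evolving as $X^i_{t+1} = X^i_t - D^i_{t+1} + \nu^i_t \xi_{t+1}$, where $\nu^i_t\in\{0,1\}$, $\sum_i\nu^i_t=1$. Given $X^i_t = x\ge 1$, $D^i_{t+1}\sim \mathrm{Binomial}(x, q_i/x)$; if $x=0$ there are no departures. Standing assumption: $1>q_1>\dots>q_I>2p>0$. A stationary policy is a map $v:\mathcal N^I\to\{e_1,\dots,e_I\}$ (unit coordinate vectors) with $\nu_t = v(X_t)$; under it $\{X_t\}$ is a time-homogeneous Markov chain. $\Phi([x_1,\dots,x_I])=\sum_i e^{a x_i}$ where $a>0$ satisfies $p(e^a-1)<\frac{q_I}{2}(1-e^{-a})$. *)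

theory Defs
  imports "HOL-Probability.Probability"
begin

type_synonym 'i qstate = "'i \<Rightarrow> nat"

text \<open>One-step transition kernel of the processor sharing chain under stationary policy v
  (v x is the queue receiving a possible arrival; i.e. nu_t = e_(v X_t)).\<close>
definition queue_kernel ::
  "real \<Rightarrow> ('i::finite \<Rightarrow> real) \<Rightarrow> ('i qstate \<Rightarrow> 'i) \<Rightarrow> 'i qstate \<Rightarrow> 'i qstate pmf" where
  "queue_kernel p q v x =
     bind_pmf (bernoulli_pmf p) (\<lambda>\<xi>.
     bind_pmf (Pi_pmf UNIV 0 (\<lambda>i. if x i = 0 then return_pmf 0
                                   else binomial_pmf (x i) (q i / real (x i)))) (\<lambda>D.
     return_pmf (\<lambda>i. x i - D i + (if v x = i \<and> \<xi> then 1 else 0))))"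

primrec kstep :: "('s \<Rightarrow> 's pmf) \<Rightarrow> 's \<Rightarrow> nat \<Rightarrow> 's pmf" where
  "kstep K x 0 = return_pmf x"
| "kstep K x (Suc n) = bind_pmf (kstep K x n) K"

primrec path_pmf :: "('s \<Rightarrow> 's pmf) \<Rightarrow> 's \<Rightarrow> nat \<Rightarrow> 's list pmf" where
  "path_pmf K x 0 = return_pmf [x]"
| "path_pmf K x (Suc n) = bind_pmf (path_pmf K x n) (\<lambda>xs. map_pmf (\<lambda>y. xs @ [y]) (K (last xs)))"

definition path_from :: "('s \<Rightarrow> 's pmf) \<Rightarrow> 's pmf \<Rightarrow> nat \<Rightarrow> 's list pmf" where
  "path_from K mu n = bind_pmf mu (\<lambda>x. path_pmf K x n)"

definition stationary :: "('s \<Rightarrow> 's pmf) \<Rightarrow> 's pmf \<Rightarrow> bool" where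
  "stationary K \<pi> \<longleftrightarrow> bind_pmf \<pi> K = \<pi>"

definition accessible :: "('s \<Rightarrow> 's pmf) \<Rightarrow> 's \<Rightarrow> 's \<Rightarrow> bool" where
  "accessible K x y \<longleftrightarrow> (\<exists>n. pmf (kstep K x n) y > 0)"

definition communicating_class :: "('s \<Rightarrow> 's pmf) \<Rightarrow> 's \<Rightarrow> 's set" where
  "communicating_class K x = {y. accessible K x y \<and> accessible K y x}"

definition closed_set :: "('s \<Rightarrow> 's pmf) \<Rightarrow> 's set \<Rightarrow> bool" where
  "closed_set K S \<longleftrightarrow> (\<forall>x\<in>S. \<forall>y. accessible K x y \<longrightarrow> y \<in> S)"

definition period :: "('s \<Rightarrow> 's pmf) \<Rightarrow> 's \<Rightarrow> nat" where
  "period K x = Gcd {n. n > 0 \<and> pmf (kstep K x n) x > 0}"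

definition return_prob :: "('s \<Rightarrow> 's pmf) \<Rightarrow> 's \<Rightarrow> real" where
  "return_prob K x = (SUP n. measure_pmf.prob (path_pmf K x n) {xs. \<exists>t\<in>{1..n}. xs ! t = x})"

definition transient :: "('s \<Rightarrow> 's pmf) \<Rightarrow> 's \<Rightarrow> bool" where
  "transient K x \<longleftrightarrow> return_prob K x < 1"

text \<open>Total variation distance (as l1 distance) between two distributions.\<close>
definition tv_dist :: "'s pmf \<Rightarrow> 's pmf \<Rightarrow> real" where
  "tv_dist P Q = (\<Sum>\<^sub>\<infinity>y. \<bar>pmf P y - pmf Q y\<bar>)"

definition geom_ergodic_on :: "('s \<Rightarrow> 's pmf) \<Rightarrow> 's set \<Rightarrow> 's pmf \<Rightarrow> bool" where
  "geom_ergodic_on K S \<pi> \<longleftrightarrow>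
     (\<exists>\<rho> M. 0 \<le> \<rho> \<and> \<rho> < 1 \<and> (\<forall>x\<in>S. \<forall>n. tv_dist (kstep K x n) \<pi> \<le> M x * \<rho> ^ n))"

text \<open>Hitting time of theta, truncated at n, for a path prefix [X_0,...,X_n]:
  min(tau_theta, n) with tau_theta = min{t >= 0. X_t = theta}.\<close>
definition hit_trunc :: "'s \<Rightarrow> nat \<Rightarrow> 's list \<Rightarrow> nat" where
  "hit_trunc \<theta> n xs = (if \<exists>t\<le>n. xs ! t = \<theta> then (LEAST t. xs ! t = \<theta>) else n)"

text \<open>E[F(tau_theta, X_0..X_tau)] for functionals monotone in the truncation, computed
  by monotone convergence as the supremum over n of E[F(min(tau,n), path)]; this value
  is infinite whenever tau = infinity with positive probability and F grows to infinity.\<close>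
definition hit_expect ::
  "('s \<Rightarrow> 's pmf) \<Rightarrow> 's \<Rightarrow> 's pmf \<Rightarrow> (nat \<Rightarrow> 's list \<Rightarrow> ennreal) \<Rightarrow> ennreal" where
  "hit_expect K \<theta> mu F = (SUP n. \<integral>\<^sup>+ xs. F (hit_trunc \<theta> n xs) xs \<partial>measure_pmf (path_from K mu n))"

definition Phi :: "real \<Rightarrow> ('i::finite) qstate \<Rightarrow> real" where
  "Phi a x = (\<Sum>i\<in>UNIV. exp (a * real (x i)))"

end

theory Submission
  imports Defs
begin

no_notation Infinite_Sum.abs_summable_on (infixr \<open>abs'_summable'_on\<close> 46)


lemma kstep_add: "kstep K x (m + n) = bind_pmf (kstep K x m) (\<lambda>z. kstep K z n)"
  by (induction n) (simp_all add: bind_return_pmf' bind_assoc_pmf)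

lemma finite_kstep: "(\<And>x. finite (set_pmf (K x))) \<Longrightarrow> finite (set_pmf (kstep K x n))"
  by (induction n) auto

lemma stationary_kstep: "stationary K \<pi> \<Longrightarrow> bind_pmf \<pi> (\<lambda>z. kstep K z n) = \<pi>"
proof (induction n)
  case 0 then show ?case by (simp add: bind_return_pmf')
next
  case (Suc n)
  have "bind_pmf \<pi> (\<lambda>z. kstep K z (Suc n)) = bind_pmf (bind_pmf \<pi> (\<lambda>z. kstep K z n)) K"
    by (simp add: bind_assoc_pmf)
  also have "\<dots> = \<pi>" using Suc by (simp add: stationary_def)
  finally show ?case .
qed

lemma expectation_finite:
  assumes "finite A" "set_pmf M \<subseteq> A"
  shows "measure_pmf.expectation M f = (\<Sum>a\<in>A. f a * pmf M a)"
  using assms by (intro integral_measure_pmf_real) auto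

lemma expectation_bind_finite:
  fixes f :: "'b \<Rightarrow> real"
  assumes fM: "finite (set_pmf M)" and fN: "\<And>x. x \<in> set_pmf M \<Longrightarrow> finite (set_pmf (N x))"
  shows "measure_pmf.expectation (bind_pmf M N) f = measure_pmf.expectation M (\<lambda>x. measure_pmf.expectation (N x) f)"
proof -
  define S where "S = set_pmf (bind_pmf M N)"
  have fS: "finite S" using fM fN by (auto simp: S_def)
  have pb: "pmf (bind_pmf M N) z = (\<Sum>x\<in>set_pmf M. pmf (N x) z * pmf M x)" for z
    unfolding pmf_bind by (rule expectation_finite[OF fM]) auto
  have "measure_pmf.expectation (bind_pmf M N) f = (\<Sum>z\<in>S. f z * pmf (bind_pmf M N) z)"
    by (rule expectation_finite[OF fS]) (auto simp: S_def)
  also have "\<dots> = (\<Sum>z\<in>S. \<Sum>x\<in>set_pmf M. f z * pmf (N x) z * pmf M x)"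
    by (simp add: pb sum_distrib_left mult.assoc)
  also have "\<dots> = (\<Sum>x\<in>set_pmf M. \<Sum>z\<in>S. f z * pmf (N x) z * pmf M x)"
    by (rule sum.swap)
  also have "\<dots> = (\<Sum>x\<in>set_pmf M. measure_pmf.expectation (N x) f * pmf M x)"
  proof (rule sum.cong[OF refl])
    fix x assume x: "x \<in> set_pmf M"
    have "measure_pmf.expectation (N x) f = (\<Sum>z\<in>S. f z * pmf (N x) z)"
      by (rule expectation_finite[OF fS]) (use x in \<open>auto simp: S_def\<close>)
    then show "(\<Sum>z\<in>S. f z * pmf (N x) z * pmf M x) = measure_pmf.expectation (N x) f * pmf M x"
      by (simp add: sum_distrib_right)
  qed
  also have "\<dots> = measure_pmf.expectation M (\<lambda>x. measure_pmf.expectation (N x) f)"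
    by (rule expectation_finite[OF fM, symmetric]) auto
  finally show ?thesis .
qed

lemma fin_sums_bound:
  fixes f :: "'a \<Rightarrow> real"
  assumes "\<And>F. finite F \<Longrightarrow> (\<Sum>x\<in>F. \<bar>f x\<bar>) \<le> B"
  shows "f abs_summable_on UNIV" "infsetsum (\<lambda>x. \<bar>f x\<bar>) UNIV \<le> B"
proof -
  show s: "f abs_summable_on UNIV"
    by (rule abs_summable_finite_sumsI) (use assms in auto)
  have B0: "B \<ge> 0" using assms[of "{}"] by simp
  have s': "(\<lambda>x. \<bar>f x\<bar>) abs_summable_on UNIV" using s by (simp add: abs_summable_on_def)
  have "ennreal (infsetsum (\<lambda>x. \<bar>f x\<bar>) UNIV) = (SUP F\<in>{F. finite F \<and> F \<subseteq> UNIV}. ennreal (sum (\<lambda>x. \<bar>f x\<bar>) F))"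
    by (rule infsetsum_nonneg_is_SUPREMUM_ennreal[OF s']) auto
  also have "\<dots> \<le> ennreal B"
    by (rule SUP_least) (use assms in \<open>auto intro: ennreal_leI\<close>)
  finally show "infsetsum (\<lambda>x. \<bar>f x\<bar>) UNIV \<le> B"
    using B0 by (auto simp: ennreal_le_iff2 infsetsum_nonneg)
qed

lemma minor_bound:
  fixes g h :: "'a \<Rightarrow> real"
  assumes M: "pmf M t \<ge> a" "finite (set_pmf M)" and gh: "\<And>z. \<bar>g z\<bar> \<le> h z"
  shows "\<bar>measure_pmf.expectation M g - a * g t\<bar> \<le> measure_pmf.expectation M h - a * h t"
proof -
  define A where "A = insert t (set_pmf M)"
  have fA: "finite A" using M by (simp add: A_def)
  have cnn: "0 \<le> pmf M z - (if z = t then a else 0)" for z using M by auto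
  have gen: "measure_pmf.expectation M f - a * f t = (\<Sum>z\<in>A. f z * (pmf M z - (if z = t then a else 0)))" for f :: "'a \<Rightarrow> real"
  proof -
    have "(\<Sum>z\<in>A. f z * (pmf M z - (if z = t then a else 0))) = (\<Sum>z\<in>A. f z * pmf M z) - (\<Sum>z\<in>A. (if z = t then f t * a else 0))"
      by (subst sum_subtractf[symmetric]) (rule sum.cong, auto simp: right_diff_distrib)
    also have "(\<Sum>z\<in>A. (if z = t then f t * a else 0)) = f t * a"
      using fA by (simp add: A_def)
    also have "(\<Sum>z\<in>A. f z * pmf M z) = measure_pmf.expectation M f"
      by (rule expectation_finite[symmetric, OF fA]) (auto simp: A_def)
    finally show ?thesis by simp
  qed
  note eg = gen[of g] and eh = gen[of h]
  have "\<bar>\<Sum>z\<in>A. g z * (pmf M z - (if z = t then a else 0))\<bar> \<le> (\<Sum>z\<in>A. \<bar>g z * (pmf M z - (if z = t then a else 0))\<bar>)"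
    by (rule sum_abs)
  also have "\<dots> \<le> (\<Sum>z\<in>A. h z * (pmf M z - (if z = t then a else 0)))"
    by (rule sum_mono) (use cnn gh M(1) in \<open>auto simp: abs_mult intro!: mult_right_mono\<close>)
  finally show ?thesis using eg eh by simp
qed

locale harris =
  fixes K :: "'s \<Rightarrow> 's pmf" and V :: "'s \<Rightarrow> real" and \<theta> :: 's and lam Kc \<alpha> :: real
  assumes fin: "\<And>x. finite (set_pmf (K x))"
  and V_ge: "\<And>x. V x \<ge> 1"
  and drift: "\<And>x. measure_pmf.expectation (K x) V \<le> lam * V x + Kc"
  and lam0: "0 \<le> lam" and lam1: "lam < 1" and Kc: "Kc > 0"
  and \<alpha>0: "0 < \<alpha>" and \<alpha>1: "\<alpha> \<le> 1"
  and minor: "\<And>x. V x \<le> 8 * Kc / (1 - lam) \<Longrightarrow> pmf (K x) \<theta> \<ge> \<alpha>"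
begin

definition "\<beta> = \<alpha> / (2*Kc)"
definition "ab = max ((1+lam)/2) (1 - \<alpha>/2)"
definition "w x = 1 + \<beta> * V x"
definition "d x y = (if x = y then 0 else w x + w y)"
definition P :: "('s \<Rightarrow> real) \<Rightarrow> 's \<Rightarrow> real" where "P f x = measure_pmf.expectation (K x) f"
definition Pn :: "nat \<Rightarrow> ('s \<Rightarrow> real) \<Rightarrow> 's \<Rightarrow> real" where "Pn n f x = measure_pmf.expectation (kstep K x n) f"
definition "lip L f \<longleftrightarrow> (\<forall>x y. \<bar>f x - f y\<bar> \<le> L * d x y)"

lemma \<beta>_pos: "\<beta> > 0" using \<alpha>0 Kc by (simp add: \<beta>_def)
lemma ab_lt1: "ab < 1" using \<alpha>0 lam1 by (simp add: ab_def)
lemma ab_pos: "ab > 0" using lam0 by (simp add: ab_def max_def)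
lemma lam_le_ab: "lam \<le> ab" using lam1 by (simp add: ab_def max_def)
lemma ab_ge: "1 - \<alpha>/2 \<le> ab" "(1+lam)/2 \<le> ab" by (simp_all add: ab_def)
lemma w_ge: "w x \<ge> 1" using \<beta>_pos V_ge[of x] by (simp add: w_def)
lemma d_nonneg: "d x y \<ge> 0" using w_ge[of x] w_ge[of y] by (simp add: d_def)

lemma fin_k: "finite (set_pmf (kstep K x n))" by (rule finite_kstep[OF fin])

lemma intK[simp]: "integrable (measure_pmf (K x)) (f :: 's \<Rightarrow> real)" by (rule integrable_measure_pmf_finite[OF fin])
lemma intk[simp]: "integrable (measure_pmf (kstep K x n)) (f :: 's \<Rightarrow> real)" by (rule integrable_measure_pmf_finite[OF fin_k])

lemma P_diff_const: "P (\<lambda>z. f z - c) x = P f x - c"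
  by (simp add: P_def)

lemma P_abs: "\<bar>P g x\<bar> \<le> P (\<lambda>z. \<bar>g z\<bar>) x"
  unfolding P_def by (rule integral_abs_bound[THEN order_trans]) simp

lemma P_mono: "(\<And>z. f z \<le> g z) \<Longrightarrow> P f x \<le> P g x"
  unfolding P_def by (rule integral_mono) auto

lemma P_w: "P w x = 1 + \<beta> * P V x"
  unfolding P_def w_def[abs_def] by (simp add: integral_add)

lemma P_w_le: "P w x \<le> 1 + \<beta> * (lam * V x + Kc)"
  unfolding P_w using drift[of x] \<beta>_pos by (simp add: P_def)

lemma centering:
  assumes L: "L \<ge> 0" and l: "lip L f"
  obtains c where "\<And>z. \<bar>f z - c\<bar> \<le> L * w z"
proof -
  define c where "c = (INF u. f u + L * w u)"
  have lo: "f u + L * w u \<ge> f z - L * w z" for u z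
  proof (cases "u = z")
    case True then show ?thesis using L w_ge[of z] by simp
  next
    case False
    then have "\<bar>f z - f u\<bar> \<le> L * (w z + w u)" using l unfolding lip_def d_def
      by (metis (full_types))
    then show ?thesis by (simp add: algebra_simps abs_le_iff)
  qed
  have bdd: "bdd_below (range (\<lambda>u. f u + L * w u))"
    by (rule bdd_belowI[of _ "f \<theta> - L * w \<theta>"]) (use lo in auto)
  have "\<bar>f z - c\<bar> \<le> L * w z" for z
  proof -
    have "c \<le> f z + L * w z" unfolding c_def by (rule cINF_lower[OF bdd]) simp
    moreover have "f z - L * w z \<le> c" unfolding c_def by (rule cINF_greatest) (use lo in auto)
    ultimately show ?thesis by (simp add: abs_le_iff)
  qed
  then show ?thesis by (rule that)
qed

lemma contraction:
  assumes L: "L \<ge> 0" and l: "lip L f"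
  shows "lip (ab * L) (P f)"
  unfolding lip_def
proof (intro allI)
  fix x y
  show "\<bar>P f x - P f y\<bar> \<le> ab * L * d x y"
  proof (cases "x = y")
    case True then show ?thesis by (simp add: d_def)
  next
    case xy: False
    obtain c where c: "\<And>z. \<bar>f z - c\<bar> \<le> L * w z" using centering[OF L l] by blast
    define g where "g z = f z - c" for z
    have gb: "\<bar>g z\<bar> \<le> L * w z" for z using c by (simp add: g_def)
    have "P f x - P f y = P g x - P g y"
      unfolding g_def[abs_def] P_diff_const by simp
    have dxy: "d x y = 2 + \<beta> * (V x + V y)" using xy by (simp add: d_def w_def algebra_simps)
    have PLw: "P (\<lambda>z. L * w z) x = L * P w x" for x by (simp add: P_def)
    have \<beta>Kc: "2 * \<beta> * Kc = \<alpha>" using Kc by (simp add: \<beta>_def)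
    show ?thesis
    proof (cases "V x \<le> 8 * Kc / (1 - lam) \<and> V y \<le> 8 * Kc / (1 - lam)")
      case True
      have bx: "\<bar>P g z - \<alpha> * g \<theta>\<bar> \<le> L * (1 - \<alpha> + \<beta> * (lam * V z + Kc))" if "V z \<le> 8 * Kc / (1 - lam)" for z
      proof -
        have "\<bar>P g z - \<alpha> * g \<theta>\<bar> \<le> P (\<lambda>u. L * w u) z - \<alpha> * (L * w \<theta>)"
          unfolding P_def by (rule minor_bound[OF minor[OF that] fin gb])
        also have "\<dots> \<le> L * (P w z - \<alpha>)"
          using w_ge[of \<theta>] L \<alpha>0 by (simp add: PLw algebra_simps mult_left_mono)
        also have "\<dots> \<le> L * (1 - \<alpha> + \<beta> * (lam * V z + Kc))"
          using P_w_le[of z] L by (intro mult_left_mono) auto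
        finally show ?thesis .
      qed
      have "\<bar>P g x - P g y\<bar> \<le> \<bar>P g x - \<alpha> * g \<theta>\<bar> + \<bar>P g y - \<alpha> * g \<theta>\<bar>" by simp
      also have "\<dots> \<le> L * (1 - \<alpha> + \<beta> * (lam * V x + Kc)) + L * (1 - \<alpha> + \<beta> * (lam * V y + Kc))"
        using bx[of x] bx[of y] True by simp
      also have "\<dots> = L * (2 - \<alpha> + \<beta> * lam * (V x + V y))"
      proof -
        have "L * (1 - \<alpha> + \<beta> * (lam * V x + Kc)) + L * (1 - \<alpha> + \<beta> * (lam * V y + Kc)) - L * (2 - \<alpha> + \<beta> * lam * (V x + V y)) = L * (2 * \<beta> * Kc - \<alpha>)"
          by (simp add: algebra_simps)
        then show ?thesis using \<beta>Kc by simp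
      qed
      also have "\<dots> \<le> L * (ab * (2 + \<beta> * (V x + V y)))"
      proof (intro mult_left_mono L)
        have "2 - \<alpha> \<le> ab * 2" using ab_ge by simp
        moreover have "\<beta> * lam * (V x + V y) \<le> ab * (\<beta> * (V x + V y))"
          using lam_le_ab \<beta>_pos V_ge[of x] V_ge[of y]
          by (simp add: mult.commute mult.left_commute mult_left_mono)
        ultimately show "2 - \<alpha> + \<beta> * lam * (V x + V y) \<le> ab * (2 + \<beta> * (V x + V y))"
          by (simp add: algebra_simps)
      qed
      finally show ?thesis using \<open>P f x - P f y = P g x - P g y\<close> dxy by (simp add: mult_ac)
    next
      case False
      have R: "V x + V y \<ge> 8 * Kc / (1 - lam)" using False V_ge[of x] V_ge[of y] by auto
      have bz: "\<bar>P g z\<bar> \<le> L * (1 + \<beta> * (lam * V z + Kc))" for z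
      proof -
        have "\<bar>P g z\<bar> \<le> P (\<lambda>u. \<bar>g u\<bar>) z" by (rule P_abs)
        also have "\<dots> \<le> P (\<lambda>u. L * w u) z" by (rule P_mono) (rule gb)
        also have "\<dots> \<le> L * (1 + \<beta> * (lam * V z + Kc))"
          unfolding PLw using P_w_le[of z] L by (intro mult_left_mono) auto
        finally show ?thesis .
      qed
      have "\<bar>P g x - P g y\<bar> \<le> \<bar>P g x\<bar> + \<bar>P g y\<bar>" by simp
      also have "\<dots> \<le> L * (1 + \<beta> * (lam * V x + Kc)) + L * (1 + \<beta> * (lam * V y + Kc))"
        using bz[of x] bz[of y] by simp
      also have "\<dots> = L * (2 + \<alpha> + \<beta> * lam * (V x + V y))"
      proof -
        have "L * (1 + \<beta> * (lam * V x + Kc)) + L * (1 + \<beta> * (lam * V y + Kc)) - L * (2 + \<alpha> + \<beta> * lam * (V x + V y)) = L * (2 * \<beta> * Kc - \<alpha>)"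
          by (simp add: algebra_simps)
        then show ?thesis using \<beta>Kc by simp
      qed
      also have "\<dots> \<le> L * (ab * (2 + \<beta> * (V x + V y)))"
      proof (intro mult_left_mono L)
        define S where "S = V x + V y"
        have "(ab - lam) * (\<beta> * S) \<ge> ((1 - lam)/2) * (\<beta> * (8 * Kc / (1 - lam)))"
          using ab_ge lam1 \<beta>_pos R Kc unfolding S_def
          by (intro mult_mono) (auto simp: field_simps)
        also have "((1 - lam)/2) * (\<beta> * (8 * Kc / (1 - lam))) = 2 * (2 * \<beta> * Kc)"
          using lam1 by (simp add: field_simps)
        also have "\<dots> = 2 * \<alpha>" using \<beta>Kc by simp
        finally have "(ab - lam) * (\<beta> * S) \<ge> 2 * \<alpha>" .
        then show "2 + \<alpha> + \<beta> * lam * S \<le> ab * (2 + \<beta> * S)"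
          using ab_ge by (simp add: algebra_simps)
      qed
      finally show ?thesis using \<open>P f x - P f y = P g x - P g y\<close> dxy by (simp add: mult_ac)
    qed
  qed
qed


lemma Pn_Suc: "Pn (Suc n) f x = Pn n (P f) x"
  unfolding Pn_def P_def kstep.simps
  by (rule expectation_bind_finite[OF fin_k fin])

lemma Pn_0: "Pn 0 f x = f x" by (simp add: Pn_def)

lemma Pn_add: "Pn (s + n) f x = Pn s (Pn n f) x"
  unfolding Pn_def kstep_add
  by (rule expectation_bind_finite[OF fin_k fin_k])

lemma Pn_mono: "(\<And>z. f z \<le> g z) \<Longrightarrow> Pn n f x \<le> Pn n g x"
  unfolding Pn_def by (rule integral_mono) auto

lemma lip_Pn: "L \<ge> 0 \<Longrightarrow> lip L f \<Longrightarrow> lip (ab ^ n * L) (Pn n f)"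
proof (induction n arbitrary: f L)
  case 0 then show ?case by (simp add: Pn_0[abs_def])
next
  case (Suc n)
  have "lip (ab * L) (P f)" by (rule contraction[OF Suc.prems])
  then have "lip (ab ^ n * (ab * L)) (Pn n (P f))"
    using Suc.IH[of "ab * L" "P f"] Suc.prems ab_pos by simp
  then show ?case by (simp add: Pn_Suc[abs_def] mult_ac)
qed

lemma Pn_V: "Pn n V x \<le> V x + Kc / (1 - lam)"
proof (induction n arbitrary: x)
  case 0 then show ?case using Kc lam1 by (simp add: Pn_0)
next
  case (Suc n)
  have "Pn (Suc n) V x = Pn n (P V) x" by (rule Pn_Suc)
  also have "\<dots> \<le> Pn n (\<lambda>z. lam * V z + Kc) x"
    by (rule Pn_mono) (use drift in \<open>simp add: P_def\<close>)
  also have "\<dots> = lam * Pn n V x + Kc" by (simp add: Pn_def)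
  also have "\<dots> \<le> lam * (V x + Kc / (1 - lam)) + Kc"
    using Suc.IH[of x] lam0 by (simp add: mult_left_mono)
  also have "\<dots> \<le> V x + Kc / (1 - lam)"
  proof -
    have "lam * V x \<le> V x" using lam1 V_ge[of x] by simp
    moreover have "lam * (Kc / (1 - lam)) + Kc = Kc / (1 - lam)" using lam1 by (simp add: field_simps)
    ultimately show ?thesis by (simp add: algebra_simps)
  qed
  finally show ?case .
qed

lemma lip_bounded: assumes "c \<ge> 0" "\<And>z. \<bar>g z\<bar> \<le> c * w z" shows "lip c g"
  unfolding lip_def d_def
proof (intro allI)
  fix x y
  show "\<bar>g x - g y\<bar> \<le> c * (if x = y then 0 else w x + w y)"
    using assms(2)[of x] assms(2)[of y] by (auto simp: algebra_simps)
qed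

definition "B = V \<theta> + Kc / (1 - lam)"
definition "C2 = 2 + \<beta> * (V \<theta> + B)"

lemma C2_pos: "C2 > 0" using \<beta>_pos V_ge[of \<theta>] Pn_V[of 0 \<theta>] by (simp add: C2_def B_def Pn_0 add_pos_nonneg)

lemma Pn_lip_theta:
  assumes "lip L f" "L \<ge> 0"
  shows "\<bar>Pn (n + s) f \<theta> - Pn n f \<theta>\<bar> \<le> L * C2 * ab ^ n"
proof -
  have l: "lip (ab ^ n * L) (Pn n f)" by (rule lip_Pn[OF assms(2,1)])
  have "Pn (n + s) f \<theta> - Pn n f \<theta> = Pn s (\<lambda>z. Pn n f z - Pn n f \<theta>) \<theta>"
    unfolding add.commute[of n s] Pn_add by (simp add: Pn_def[of s])
  also have "\<bar>\<dots>\<bar> \<le> Pn s (\<lambda>z. \<bar>Pn n f z - Pn n f \<theta>\<bar>) \<theta>"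
    unfolding Pn_def by (rule integral_abs_bound[THEN order_trans]) simp
  also have "\<dots> \<le> Pn s (\<lambda>z. ab ^ n * L * (w z + w \<theta>)) \<theta>"
  proof (rule Pn_mono)
    fix z
    show "\<bar>Pn n f z - Pn n f \<theta>\<bar> \<le> ab ^ n * L * (w z + w \<theta>)"
    proof (cases "z = \<theta>")
      case True then show ?thesis using ab_pos assms(2) w_ge[of \<theta>] by simp
    next
      case False then show ?thesis using l unfolding lip_def d_def by (metis (full_types))
    qed
  qed
  also have "\<dots> = ab ^ n * L * (2 + \<beta> * (Pn s V \<theta> + V \<theta>))"
    by (simp add: Pn_def w_def integral_add algebra_simps)
  also have "\<dots> \<le> ab ^ n * L * C2"
    unfolding C2_def B_def using Pn_V[of s \<theta>] \<beta>_pos ab_pos assms(2)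
    by (intro mult_left_mono) auto
  finally show ?thesis by (simp add: mult_ac)
qed


abbreviation "X n y \<equiv> pmf (kstep K \<theta> n) y"

lemma Pn_fin_supp:
  assumes "finite F" "\<And>y. y \<notin> F \<Longrightarrow> f y = 0"
  shows "Pn n f x = (\<Sum>y\<in>F. f y * pmf (kstep K x n) y)"
  unfolding Pn_def by (rule integral_measure_pmf_real) (use assms in auto)

lemma weighted_cauchy:
  assumes F: "finite F"
  shows "(\<Sum>y\<in>F. \<bar>X (n + s) y - X n y\<bar> * w y) \<le> C2 * ab ^ n"
proof -
  define f where "f y = (if y \<in> F then sgn (X (n + s) y - X n y) * w y else 0)" for y
  have fb: "\<bar>f z\<bar> \<le> 1 * w z" for z using w_ge[of z] by (auto simp: f_def abs_mult abs_sgn_eq)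
  have l: "lip 1 f" by (rule lip_bounded[OF _ fb]) simp
  have "Pn (n + s) f \<theta> - Pn n f \<theta> = (\<Sum>y\<in>F. f y * X (n + s) y) - (\<Sum>y\<in>F. f y * X n y)"
    by (simp add: Pn_fin_supp[OF F] f_def)
  also have "\<dots> = (\<Sum>y\<in>F. \<bar>X (n + s) y - X n y\<bar> * w y)"
    unfolding sum_subtractf[symmetric]
  proof (rule sum.cong[OF refl])
    fix y assume "y \<in> F"
    then show "f y * X (n + s) y - f y * X n y = \<bar>X (n + s) y - X n y\<bar> * w y"
      by (cases "X (n + s) y" "X n y" rule: linorder_cases) (auto simp: f_def algebra_simps)
  qed
  finally have "(\<Sum>y\<in>F. \<bar>X (n + s) y - X n y\<bar> * w y) = Pn (n + s) f \<theta> - Pn n f \<theta>" by simp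
  also have "\<dots> \<le> 1 * C2 * ab ^ n" using Pn_lip_theta[OF l, of n s] by simp
  finally show ?thesis by simp
qed

lemma X_cauchy: "\<bar>X (n + s) y - X n y\<bar> \<le> C2 * ab ^ n"
proof -
  have "\<bar>X (n + s) y - X n y\<bar> * 1 \<le> \<bar>X (n + s) y - X n y\<bar> * w y"
    using w_ge[of y] by (intro mult_left_mono) auto
  then show ?thesis using weighted_cauchy[of "{y}" n s] by simp
qed

definition "\<pi>0 y = lim (\<lambda>n. X n y)"

lemma X_conv: "(\<lambda>n. X n y) \<longlonglongrightarrow> \<pi>0 y"
proof -
  have "Cauchy (\<lambda>n. X n y)"
  proof (rule metric_CauchyI)
    fix e :: real assume e: "e > 0"
    have "(\<lambda>n. C2 * ab ^ n) \<longlonglongrightarrow> C2 * 0"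
      by (intro tendsto_intros LIMSEQ_power_zero) (use ab_lt1 ab_pos in auto)
    then obtain M where M: "\<And>n. n \<ge> M \<Longrightarrow> \<bar>C2 * ab ^ n\<bar> < e"
      using e by (auto simp: lim_sequentially dist_real_def)
    show "\<exists>M. \<forall>m\<ge>M. \<forall>n\<ge>M. dist (X m y) (X n y) < e"
    proof (intro exI allI impI)
      fix m n assume mn: "m \<ge> M" "n \<ge> M"
      show "dist (X m y) (X n y) < e"
      proof (cases "m \<le> n")
        case True
        then obtain s where "n = m + s" using le_Suc_ex by blast
        then show ?thesis using X_cauchy[of m s y] M[OF mn(1)] by (auto simp: dist_real_def abs_minus_commute)
      next
        case False
        then obtain s where "m = n + s" using le_Suc_ex[of n m] by auto
        then show ?thesis using X_cauchy[of n s y] M[OF mn(2)] by (auto simp: dist_real_def)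
      qed
    qed
  qed
  then show ?thesis unfolding \<pi>0_def by (simp add: Cauchy_convergent_iff convergent_LIMSEQ_iff)
qed

lemma \<pi>0_nonneg: "\<pi>0 y \<ge> 0"
  by (rule LIMSEQ_le_const[OF X_conv]) auto

lemma \<pi>0_approx:
  assumes F: "finite F"
  shows "(\<Sum>y\<in>F. \<bar>\<pi>0 y - X n y\<bar> * w y) \<le> C2 * ab ^ n"
proof -
  have "(\<lambda>s. \<Sum>y\<in>F. \<bar>X (s + n) y - X n y\<bar> * w y) \<longlonglongrightarrow> (\<Sum>y\<in>F. \<bar>\<pi>0 y - X n y\<bar> * w y)"
    by (intro tendsto_intros LIMSEQ_ignore_initial_segment X_conv)
  moreover have "(\<Sum>y\<in>F. \<bar>X (s + n) y - X n y\<bar> * w y) \<le> C2 * ab ^ n" for s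
    using weighted_cauchy[OF F, of n s] by (simp add: add.commute)
  ultimately show ?thesis by (intro LIMSEQ_le_const2) auto
qed

end


lemma integrable_pmf_iff:
  fixes g :: "'a \<Rightarrow> real"
  shows "integrable (measure_pmf p) g \<longleftrightarrow> (\<lambda>x. pmf p x * g x) abs_summable_on UNIV"
  unfolding measure_pmf_eq_density abs_summable_on_def by (subst integrable_density) auto

lemma zero_by_geom:
  fixes c C r :: real
  assumes "\<And>n. \<bar>c\<bar> \<le> C * r ^ n" "0 \<le> r" "r < 1"
  shows "c = 0"
proof -
  have "(\<lambda>n. C * r ^ n) \<longlonglongrightarrow> C * 0" by (intro tendsto_intros LIMSEQ_power_zero) (use assms in auto)
  then have "\<bar>c\<bar> \<le> 0" by (intro LIMSEQ_le_const[of "\<lambda>n. C * r ^ n"]) (use assms in auto)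
  then show ?thesis by simp
qed

lemma abs_aux: "0 \<le> (b::real) \<Longrightarrow> \<bar>a\<bar> \<le> \<bar>a - b\<bar> + b" by arith

context harris
begin

lemma le_mult_w: "\<bar>a\<bar> \<le> \<bar>a\<bar> * w y"
  using mult_left_mono[of 1 "w y" "\<bar>a\<bar>"] w_ge[of y] by simp

lemma X0: "X 0 y = (if y = \<theta> then 1 else 0)" by (simp add: pmf_return)

lemma \<pi>0w_sum: "finite F \<Longrightarrow> (\<Sum>y\<in>F. \<bar>\<pi>0 y * w y\<bar>) \<le> C2 + w \<theta>"
proof -
  assume F: "finite F"
  have "(\<Sum>y\<in>F. \<bar>\<pi>0 y * w y\<bar>) \<le> (\<Sum>y\<in>F. \<bar>\<pi>0 y - X 0 y\<bar> * w y + X 0 y * w y)"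
  proof (rule sum_mono)
    fix y
    have "\<bar>\<pi>0 y * w y\<bar> = \<bar>\<pi>0 y\<bar> * w y" using w_ge[of y] by (simp add: abs_mult)
    also have "\<dots> \<le> (\<bar>\<pi>0 y - X 0 y\<bar> + X 0 y) * w y"
      using w_ge[of y] abs_aux[OF pmf_nonneg[of "kstep K \<theta> 0" y], of "\<pi>0 y"] by (intro mult_right_mono) auto
    finally show "\<bar>\<pi>0 y * w y\<bar> \<le> \<bar>\<pi>0 y - X 0 y\<bar> * w y + X 0 y * w y" by (simp add: algebra_simps)
  qed
  also have "\<dots> = (\<Sum>y\<in>F. \<bar>\<pi>0 y - X 0 y\<bar> * w y) + (\<Sum>y\<in>F. X 0 y * w y)" by (simp add: sum.distrib)
  also have "(\<Sum>y\<in>F. X 0 y * w y) \<le> w \<theta>"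
  proof -
    have "(\<Sum>y\<in>F. X 0 y * w y) = (\<Sum>y\<in>F. if y = \<theta> then w \<theta> else 0)"
      by (rule sum.cong) (auto simp: X0)
    also have "\<dots> \<le> w \<theta>" using F w_ge[of \<theta>] by (simp add: sum.delta)
    finally show ?thesis .
  qed
  finally show ?thesis using \<pi>0_approx[OF F, of 0] by simp
qed

lemma \<pi>0_summable: "\<pi>0 abs_summable_on UNIV"
proof (rule fin_sums_bound(1))
  fix F :: "'s set" assume F: "finite F"
  have "(\<Sum>x\<in>F. \<bar>\<pi>0 x\<bar>) \<le> (\<Sum>x\<in>F. \<bar>\<pi>0 x * w x\<bar>)"
  proof (rule sum_mono)
    fix x show "\<bar>\<pi>0 x\<bar> \<le> \<bar>\<pi>0 x * w x\<bar>" using le_mult_w[of "\<pi>0 x" x] w_ge[of x] by (simp add: abs_mult)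
  qed
  with \<pi>0w_sum[OF F] show "(\<Sum>x\<in>F. \<bar>\<pi>0 x\<bar>) \<le> C2 + w \<theta>" by simp
qed

lemma \<pi>0_sum1: "infsetsum \<pi>0 UNIV = 1"
proof -
  have "\<bar>infsetsum \<pi>0 UNIV - 1\<bar> \<le> C2 * ab ^ n" for n
  proof -
    have s: "(\<lambda>y. \<pi>0 y - X n y) abs_summable_on UNIV" "infsetsum (\<lambda>y. \<bar>\<pi>0 y - X n y\<bar>) UNIV \<le> C2 * ab ^ n"
    proof -
      have *: "(\<Sum>y\<in>F. \<bar>\<pi>0 y - X n y\<bar>) \<le> C2 * ab ^ n" if "finite F" for F
      proof -
        have "(\<Sum>y\<in>F. \<bar>\<pi>0 y - X n y\<bar>) \<le> (\<Sum>y\<in>F. \<bar>\<pi>0 y - X n y\<bar> * w y)"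
          by (rule sum_mono) (rule le_mult_w)
        then show ?thesis using \<pi>0_approx[OF that, of n] by simp
      qed
      show "(\<lambda>y. \<pi>0 y - X n y) abs_summable_on UNIV" by (rule fin_sums_bound(1)[OF *])
      show "infsetsum (\<lambda>y. \<bar>\<pi>0 y - X n y\<bar>) UNIV \<le> C2 * ab ^ n" by (rule fin_sums_bound(2)[OF *])
    qed
    have "infsetsum \<pi>0 UNIV - 1 = infsetsum \<pi>0 UNIV - infsetsum (X n) UNIV"
      by (simp add: infsetsum_pmf_eq_1)
    also have "\<dots> = infsetsum (\<lambda>y. \<pi>0 y - X n y) UNIV"
      by (rule infsetsum_diff[symmetric]) (use \<pi>0_summable in auto)
    finally have "\<bar>infsetsum \<pi>0 UNIV - 1\<bar> \<le> infsetsum (\<lambda>y. norm (\<pi>0 y - X n y)) UNIV"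
      using norm_infsetsum_bound[of "\<lambda>y. \<pi>0 y - X n y" UNIV] by simp
    then show ?thesis using s(2) by simp
  qed
  then show ?thesis using zero_by_geom[of "infsetsum \<pi>0 UNIV - 1" C2 ab] ab_pos ab_lt1 by simp
qed

definition "stat = embed_pmf \<pi>0"

lemma pmf_stat: "pmf stat y = \<pi>0 y"
  unfolding stat_def
proof (rule pmf_embed_pmf)
  show "\<And>x. 0 \<le> \<pi>0 x" by (rule \<pi>0_nonneg)
  have "(\<integral>\<^sup>+ x. ennreal (\<pi>0 x) \<partial>count_space UNIV) = ennreal (infsetsum \<pi>0 UNIV)"
    by (rule nn_integral_conv_infsetsum) (use \<pi>0_summable \<pi>0_nonneg in auto)
  then show "(\<integral>\<^sup>+ x. ennreal (\<pi>0 x) \<partial>count_space UNIV) = 1" by (simp add: \<pi>0_sum1)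
qed


lemma stat_approx:
  assumes c: "c \<ge> 0" and gb: "\<And>z. \<bar>g z\<bar> \<le> c * w z"
  shows "integrable (measure_pmf stat) g"
    and "\<bar>measure_pmf.expectation stat g - Pn n g \<theta>\<bar> \<le> c * C2 * ab ^ n"
proof -
  have pw: "\<bar>p * g y\<bar> \<le> c * \<bar>p * w y\<bar>" for p y
  proof -
    have "\<bar>p * g y\<bar> = \<bar>p\<bar> * \<bar>g y\<bar>" by (simp add: abs_mult)
    also have "\<dots> \<le> \<bar>p\<bar> * (c * w y)" by (intro mult_left_mono gb) auto
    also have "\<dots> = c * \<bar>p * w y\<bar>" using w_ge[of y] by (simp add: abs_mult)
    finally show ?thesis .
  qed
  have s1: "(\<lambda>y. \<pi>0 y * g y) abs_summable_on UNIV"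
  proof (rule fin_sums_bound(1))
    fix F :: "'s set" assume F: "finite F"
    have "(\<Sum>y\<in>F. \<bar>\<pi>0 y * g y\<bar>) \<le> (\<Sum>y\<in>F. c * \<bar>\<pi>0 y * w y\<bar>)" by (rule sum_mono) (rule pw)
    also have "\<dots> \<le> c * (C2 + w \<theta>)" using \<pi>0w_sum[OF F] c by (simp add: sum_distrib_left[symmetric] mult_left_mono)
    finally show "(\<Sum>y\<in>F. \<bar>\<pi>0 y * g y\<bar>) \<le> c * (C2 + w \<theta>)" .
  qed
  have bd: "(\<Sum>y\<in>F. \<bar>(\<pi>0 y - X n y) * g y\<bar>) \<le> c * C2 * ab ^ n" if F: "finite F" for F
  proof -
    have "(\<Sum>y\<in>F. \<bar>(\<pi>0 y - X n y) * g y\<bar>) \<le> (\<Sum>y\<in>F. c * (\<bar>\<pi>0 y - X n y\<bar> * w y))"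
    proof (rule sum_mono)
      fix y show "\<bar>(\<pi>0 y - X n y) * g y\<bar> \<le> c * (\<bar>\<pi>0 y - X n y\<bar> * w y)"
        using pw[of "\<pi>0 y - X n y" y] w_ge[of y] by (simp add: abs_mult)
    qed
    also have "\<dots> \<le> c * (C2 * ab ^ n)" using \<pi>0_approx[OF F, of n] c by (simp add: sum_distrib_left[symmetric] mult_left_mono)
    finally show ?thesis by (simp add: mult_ac)
  qed
  have s3: "(\<lambda>y. (\<pi>0 y - X n y) * g y) abs_summable_on UNIV" by (rule fin_sums_bound(1)[OF bd])
  have s2: "(\<lambda>y. X n y * g y) abs_summable_on UNIV"
  proof -
    have "(\<lambda>y. \<pi>0 y * g y - (\<pi>0 y - X n y) * g y) abs_summable_on UNIV" using s1 s3 by auto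
    then show ?thesis by (simp add: algebra_simps)
  qed
  show "integrable (measure_pmf stat) g" unfolding integrable_pmf_iff pmf_stat by (rule s1)
  have "measure_pmf.expectation stat g - Pn n g \<theta> = infsetsum (\<lambda>y. \<pi>0 y * g y) UNIV - infsetsum (\<lambda>y. X n y * g y) UNIV"
    by (simp add: pmf_expectation_eq_infsetsum Pn_def pmf_stat)
  also have "\<dots> = infsetsum (\<lambda>y. (\<pi>0 y - X n y) * g y) UNIV"
    by (subst infsetsum_diff[symmetric, OF s1 s2]) (simp add: algebra_simps)
  finally have "\<bar>measure_pmf.expectation stat g - Pn n g \<theta>\<bar> \<le> infsetsum (\<lambda>y. norm ((\<pi>0 y - X n y) * g y)) UNIV"
    using norm_infsetsum_bound[of "\<lambda>y. (\<pi>0 y - X n y) * g y" UNIV] by simp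
  also have "\<dots> \<le> c * C2 * ab ^ n" using fin_sums_bound(2)[OF bd] by simp
  finally show "\<bar>measure_pmf.expectation stat g - Pn n g \<theta>\<bar> \<le> c * C2 * ab ^ n" .
qed

lemma conv_general:
  assumes c: "c \<ge> 0" and gb: "\<And>z. \<bar>g z\<bar> \<le> c * w z"
  shows "\<bar>Pn n g x - measure_pmf.expectation stat g\<bar> \<le> c * (w x + w \<theta> + C2) * ab ^ n"
proof -
  have l: "lip (ab ^ n * c) (Pn n g)" by (rule lip_Pn[OF c lip_bounded[OF c gb]])
  have "\<bar>Pn n g x - Pn n g \<theta>\<bar> \<le> ab ^ n * c * (w x + w \<theta>)"
  proof (cases "x = \<theta>")
    case True then show ?thesis using ab_pos c w_ge[of \<theta>] by simp
  next
    case False then show ?thesis using l unfolding lip_def d_def by (metis (full_types))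
  qed
  moreover have "\<bar>measure_pmf.expectation stat g - Pn n g \<theta>\<bar> \<le> c * C2 * ab ^ n" by (rule stat_approx(2)[OF c gb])
  ultimately show ?thesis by (simp add: algebra_simps abs_le_iff)
qed


lemma X_dist: "\<bar>X m y - \<pi>0 y\<bar> \<le> C2 * ab ^ m"
  using \<pi>0_approx[of "{y}" m] le_mult_w[of "\<pi>0 y - X m y" y] by (simp add: abs_minus_commute)

lemma Pn_pmfK: "Pn n (\<lambda>x. pmf (K x) y) z = pmf (kstep K z (Suc n)) y"
  by (simp add: Pn_def pmf_bind)

lemma stationary_stat: "stationary K stat"
  unfolding stationary_def
proof (rule pmf_eqI)
  fix y
  define g where "g x = pmf (K x) y" for x
  have gb: "\<bar>g z\<bar> \<le> 1 * w z" for z using w_ge[of z] pmf_le_1[of "K z" y] by (simp add: g_def)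
  have "pmf (bind_pmf stat K) y = measure_pmf.expectation stat g" unfolding pmf_bind g_def ..
  moreover have "\<bar>measure_pmf.expectation stat g - \<pi>0 y\<bar> \<le> (2 * C2) * ab ^ n" for n
  proof -
    have "Pn n g \<theta> = X (Suc n) y" unfolding g_def[abs_def] Pn_pmfK ..
    then have "\<bar>measure_pmf.expectation stat g - X (Suc n) y\<bar> \<le> 1 * C2 * ab ^ n"
      using stat_approx(2)[OF _ gb, of n] by simp
    moreover have "\<bar>X (Suc n) y - \<pi>0 y\<bar> \<le> C2 * ab ^ n"
    proof -
      have "C2 * ab ^ Suc n \<le> C2 * ab ^ n"
        using ab_pos ab_lt1 C2_pos by (intro mult_left_mono power_decreasing) auto
      then show ?thesis using X_dist[of "Suc n" y] by linarith
    qed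
    ultimately show ?thesis by simp
  qed
  ultimately show "pmf (bind_pmf stat K) y = pmf stat y"
    using zero_by_geom[of "measure_pmf.expectation stat g - \<pi>0 y" "2 * C2" ab] ab_pos ab_lt1
    by (simp add: pmf_stat)
qed

lemma conv_pmf: "\<bar>pmf (kstep K x n) y - \<pi>0 y\<bar> \<le> (w x + w \<theta> + C2) * ab ^ n"
proof -
  define g where "g z = (if z = y then 1 else (0::real))" for z
  have gb: "\<bar>g z\<bar> \<le> 1 * w z" for z using w_ge[of z] by (auto simp: g_def)
  have "Pn n g x = pmf (kstep K x n) y" by (subst Pn_fin_supp[of "{y}"]) (auto simp: g_def)
  moreover have "measure_pmf.expectation stat g = \<pi>0 y"
    by (subst integral_measure_pmf_real[of "{y}"]) (auto simp: g_def pmf_stat split: if_splits)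
  ultimately show ?thesis using conv_general[OF _ gb, of n x] by simp
qed

lemma tv_bound: "tv_dist (kstep K x n) stat \<le> (w x + w \<theta> + C2) * ab ^ n"
proof -
  have bd: "(\<Sum>y\<in>F. \<bar>pmf (kstep K x n) y - pmf stat y\<bar>) \<le> (w x + w \<theta> + C2) * ab ^ n" if F: "finite F" for F
  proof -
    define g where "g y = (if y \<in> F then sgn (pmf (kstep K x n) y - pmf stat y) else 0)" for y
    have gb: "\<bar>g z\<bar> \<le> 1 * w z" for z using w_ge[of z] by (auto simp: g_def abs_sgn_eq)
    have "Pn n g x = (\<Sum>y\<in>F. g y * pmf (kstep K x n) y)" by (rule Pn_fin_supp[OF F]) (simp add: g_def)
    moreover have "measure_pmf.expectation stat g = (\<Sum>y\<in>F. g y * pmf stat y)"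
      by (rule integral_measure_pmf_real[OF F]) (auto simp: g_def split: if_splits)
    moreover have "(\<Sum>y\<in>F. g y * pmf (kstep K x n) y) - (\<Sum>y\<in>F. g y * pmf stat y) = (\<Sum>y\<in>F. \<bar>pmf (kstep K x n) y - pmf stat y\<bar>)"
      unfolding sum_subtractf[symmetric]
    proof (intro sum.cong refl)
      fix y assume "y \<in> F"
      then show "g y * pmf (kstep K x n) y - g y * pmf stat y = \<bar>pmf (kstep K x n) y - pmf stat y\<bar>"
        by (cases "pmf (kstep K x n) y" "pmf stat y" rule: linorder_cases) (auto simp: g_def algebra_simps)
    qed
    ultimately show ?thesis using conv_general[OF _ gb, of n x] by simp
  qed
  have s: "(\<lambda>y. pmf (kstep K x n) y - pmf stat y) abs_summable_on UNIV" by (rule fin_sums_bound(1)[OF bd])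
  have "tv_dist (kstep K x n) stat = infsetsum (\<lambda>y. \<bar>pmf (kstep K x n) y - pmf stat y\<bar>) UNIV"
  proof -
    have "(\<lambda>y. norm (pmf (kstep K x n) y - pmf stat y)) abs_summable_on UNIV"
      using s by (subst abs_summable_on_norm_iff)
    then show ?thesis unfolding tv_dist_def real_norm_def by (rule infsetsum_infsum[symmetric])
  qed
  also have "\<dots> \<le> (w x + w \<theta> + C2) * ab ^ n" by (rule fin_sums_bound(2)[OF bd])
  finally show ?thesis .
qed

lemma stat_unique: assumes "stationary K \<pi>'" shows "\<pi>' = stat"
proof (rule pmf_eqI)
  fix y
  define h where "h n z = pmf (kstep K z n) y" for n z
  have "pmf \<pi>' y = measure_pmf.expectation \<pi>' (h n)" for n
  proof -
    have "pmf \<pi>' y = pmf (bind_pmf \<pi>' (\<lambda>z. kstep K z n)) y" using stationary_kstep[OF assms, of n] by simp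
    also have "\<dots> = measure_pmf.expectation \<pi>' (h n)" unfolding pmf_bind h_def ..
    finally show ?thesis .
  qed
  moreover have "(\<lambda>n. measure_pmf.expectation \<pi>' (h n)) \<longlonglongrightarrow> measure_pmf.expectation \<pi>' (\<lambda>z. \<pi>0 y)"
  proof (rule integral_dominated_convergence[where w = "\<lambda>_. 1"])
    show "AE z in measure_pmf \<pi>'. (\<lambda>n. h n z) \<longlonglongrightarrow> \<pi>0 y"
    proof (rule AE_I2)
      fix z
      have "(\<lambda>n. (w z + w \<theta> + C2) * ab ^ n) \<longlonglongrightarrow> (w z + w \<theta> + C2) * 0"
        by (intro tendsto_intros LIMSEQ_power_zero) (use ab_pos ab_lt1 in auto)
      then have "(\<lambda>n. (w z + w \<theta> + C2) * ab ^ n) \<longlonglongrightarrow> 0" by simp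
      then have "(\<lambda>n. h n z - \<pi>0 y) \<longlonglongrightarrow> 0"
        by (rule Lim_null_comparison[rotated]) (use conv_pmf in \<open>simp add: h_def\<close>)
      then have "(\<lambda>n. (h n z - \<pi>0 y) + \<pi>0 y) \<longlonglongrightarrow> 0 + \<pi>0 y" by (intro tendsto_intros)
      then show "(\<lambda>n. h n z) \<longlonglongrightarrow> \<pi>0 y" by simp
    qed
    show "\<And>n. AE z in measure_pmf \<pi>'. norm (h n z) \<le> 1" by (auto simp: h_def pmf_le_1)
    show "(\<lambda>z. \<pi>0 y) \<in> borel_measurable (measure_pmf \<pi>')" by simp
    show "\<And>n. h n \<in> borel_measurable (measure_pmf \<pi>')" by simp
    show "integrable (measure_pmf \<pi>') (\<lambda>_. 1::real)" by simp
  qed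
  ultimately show "pmf \<pi>' y = pmf stat y"
    by (simp add: pmf_stat LIMSEQ_const_iff)
qed

end


lemma set_path_pmf: "xs \<in> set_pmf (path_pmf K x n) \<Longrightarrow> length xs = Suc n \<and> hd xs = x"
  by (induction n arbitrary: xs) (fastforce simp: hd_append)+

lemma path_pmf_Suc_first:
  "path_pmf K x (Suc n) = bind_pmf (K x) (\<lambda>y. map_pmf (\<lambda>ys. x # ys) (path_pmf K y n))"
proof (induction n arbitrary: x)
  case 0
  show ?case by (simp add: map_pmf_def bind_return_pmf)
next
  case (Suc n)
  define G where "G xs = map_pmf (\<lambda>y. xs @ [y]) (K (last xs))" for xs
  have "path_pmf K x (Suc (Suc n)) = bind_pmf (path_pmf K x (Suc n)) G"
    unfolding G_def by (rule path_pmf.simps(2))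
  also have "\<dots> = bind_pmf (K x) (\<lambda>y. bind_pmf (map_pmf (\<lambda>ys. x # ys) (path_pmf K y n)) G)"
    by (subst Suc.IH) (simp only: bind_assoc_pmf)
  also have "\<dots> = bind_pmf (K x) (\<lambda>y. map_pmf (\<lambda>ys. x # ys) (path_pmf K y (Suc n)))"
  proof (rule bind_pmf_cong[OF refl])
    fix y
    have "bind_pmf (map_pmf (\<lambda>ys. x # ys) (path_pmf K y n)) G = bind_pmf (path_pmf K y n) (\<lambda>ys. G (x # ys))"
      by (simp add: map_pmf_def bind_assoc_pmf bind_return_pmf)
    also have "\<dots> = bind_pmf (path_pmf K y n) (\<lambda>ys. map_pmf (\<lambda>ys. x # ys) (G ys))"
    proof (rule bind_pmf_cong[OF refl])
      fix ys assume "ys \<in> set_pmf (path_pmf K y n)"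
      then have "ys \<noteq> []" using set_path_pmf[of ys K y n] by auto
      then show "G (x # ys) = map_pmf (\<lambda>ys. x # ys) (G ys)"
        by (simp add: G_def pmf.map_comp o_def)
    qed
    also have "\<dots> = map_pmf (\<lambda>ys. x # ys) (path_pmf K y (Suc n))"
      by (simp add: G_def map_bind_pmf)
    finally show "bind_pmf (map_pmf (\<lambda>ys. x # ys) (path_pmf K y n)) G = map_pmf (\<lambda>ys. x # ys) (path_pmf K y (Suc n))" .
  qed
  finally show ?case .
qed

lemma hit_trunc_0: "hit_trunc \<theta> 0 xs = 0"
  by (auto simp: hit_trunc_def)

lemma hit_trunc_Cons:
  "hit_trunc \<theta> (Suc n) (x # ys) = (if x = \<theta> then 0 else Suc (hit_trunc \<theta> n ys))"
proof (cases "x = \<theta>")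
  case True
  then show ?thesis unfolding hit_trunc_def by (auto intro!: Least_equality)
next
  case False
  have ex: "(\<exists>t\<le>Suc n. (x # ys) ! t = \<theta>) \<longleftrightarrow> (\<exists>t\<le>n. ys ! t = \<theta>)"
  proof
    assume "\<exists>t\<le>Suc n. (x # ys) ! t = \<theta>"
    then obtain t where "t \<le> Suc n" "(x # ys) ! t = \<theta>" by blast
    with False show "\<exists>t\<le>n. ys ! t = \<theta>" by (cases t) auto
  next
    assume "\<exists>t\<le>n. ys ! t = \<theta>"
    then obtain t where "t \<le> n" "ys ! t = \<theta>" by blast
    then show "\<exists>t\<le>Suc n. (x # ys) ! t = \<theta>" by (intro exI[of _ "Suc t"]) auto
  qed
  show ?thesis
  proof (cases "\<exists>t\<le>n. ys ! t = \<theta>")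
    case True
    then obtain t where "ys ! t = \<theta>" by blast
    then have "(LEAST t. (x # ys) ! t = \<theta>) = Suc (LEAST t. (x # ys) ! Suc t = \<theta>)"
      using False by (intro Least_Suc[of _ "Suc t"]) auto
    then show ?thesis using True ex False unfolding hit_trunc_def by simp
  next
    case F: False
    then have nF: "\<not> (\<exists>t\<le>Suc n. (x # ys) ! t = \<theta>)" using ex by simp
    have h1: "hit_trunc \<theta> (Suc n) (x # ys) = Suc n" unfolding hit_trunc_def using nF by (rule if_not_P)
    have h2: "hit_trunc \<theta> n ys = n" unfolding hit_trunc_def using F by (rule if_not_P)
    show ?thesis using h1 h2 False by simp
  qed
qed

lemma nn_integral_finite_expect:
  fixes U :: "'a \<Rightarrow> real"
  assumes "finite (set_pmf M)" "\<And>x. U x \<ge> 0"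
  shows "(\<integral>\<^sup>+ y. ennreal (U y) \<partial>measure_pmf M) = ennreal (measure_pmf.expectation M U)"
  using assms by (intro nn_integral_eq_integral integrable_measure_pmf_finite) auto

lemma hit_exp_bound:
  fixes U :: "'s \<Rightarrow> real"
  assumes fin: "\<And>x. finite (set_pmf (K x))" and U1: "\<And>x. U x \<ge> 1"
    and dr: "\<And>x. x \<noteq> \<theta> \<Longrightarrow> exp b * measure_pmf.expectation (K x) U \<le> U x"
  shows "(\<integral>\<^sup>+ xs. ennreal (exp (b * real (hit_trunc \<theta> n xs))) \<partial>measure_pmf (path_pmf K x n)) \<le> ennreal (U x)"
proof (induction n arbitrary: x)
  case 0
  show ?case using U1[of x] by (simp add: hit_trunc_0)
next
  case (Suc n)
  show ?case
  proof (cases "x = \<theta>")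
    case True
    have "(\<integral>\<^sup>+ xs. ennreal (exp (b * real (hit_trunc \<theta> (Suc n) xs))) \<partial>measure_pmf (path_pmf K x (Suc n))) = 1"
      unfolding path_pmf_Suc_first by (simp add: hit_trunc_Cons True measure_pmf.emeasure_space_1)
    then show ?thesis using U1[of x] by simp
  next
    case False
    have "(\<integral>\<^sup>+ xs. ennreal (exp (b * real (hit_trunc \<theta> (Suc n) xs))) \<partial>measure_pmf (path_pmf K x (Suc n)))
       = (\<integral>\<^sup>+ y. \<integral>\<^sup>+ ys. ennreal (exp b) * ennreal (exp (b * real (hit_trunc \<theta> n ys))) \<partial>measure_pmf (path_pmf K y n) \<partial>measure_pmf (K x))"
      unfolding path_pmf_Suc_first by (simp add: hit_trunc_Cons False ennreal_mult'[symmetric] exp_add[symmetric] algebra_simps)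
    also have "\<dots> = (\<integral>\<^sup>+ y. ennreal (exp b) * \<integral>\<^sup>+ ys. ennreal (exp (b * real (hit_trunc \<theta> n ys))) \<partial>measure_pmf (path_pmf K y n) \<partial>measure_pmf (K x))"
      by (simp add: nn_integral_cmult)
    also have "\<dots> \<le> (\<integral>\<^sup>+ y. ennreal (exp b) * ennreal (U y) \<partial>measure_pmf (K x))"
      by (intro nn_integral_mono mult_left_mono Suc.IH) auto
    also have "\<dots> = ennreal (exp b) * ennreal (measure_pmf.expectation (K x) U)"
      using U1 by (simp add: nn_integral_cmult nn_integral_finite_expect[OF fin] order_trans[OF zero_le_one])
    also have "\<dots> = ennreal (exp b * measure_pmf.expectation (K x) U)"
      by (simp add: ennreal_mult')
    also have "\<dots> \<le> ennreal (U x)" by (intro ennreal_leI dr False)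
    finally show ?thesis .
  qed
qed

lemma sum_Cons_shift: "(\<Sum>t\<le>Suc m. f ((x # ys) ! t)) = f x + (\<Sum>t\<le>m. f (ys ! t))"
  by (simp add: sum.atMost_Suc_shift del: sum.atMost_Suc)

lemma hit_sum_bound:
  fixes H s :: "'s \<Rightarrow> real"
  assumes fin: "\<And>x. finite (set_pmf (K x))" and H0: "\<And>x. H x \<ge> 0" and s0: "\<And>x. s x \<ge> 0"
    and s\<theta>: "s \<theta> = 0"
    and dr: "\<And>x. x \<noteq> \<theta> \<Longrightarrow> s x + measure_pmf.expectation (K x) H \<le> H x"
  shows "(\<integral>\<^sup>+ xs. ennreal (\<Sum>t\<le>hit_trunc \<theta> n xs. s (xs ! t)) \<partial>measure_pmf (path_pmf K x n)) \<le> ennreal (H x)"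
proof (induction n arbitrary: x)
  case 0
  have EH: "measure_pmf.expectation (K x) H \<ge> 0" by (rule integral_nonneg_AE) (use H0 in auto)
  have "s x \<le> H x"
  proof (cases "x = \<theta>")
    case True then show ?thesis using s\<theta> H0[of x] by simp
  next
    case False then show ?thesis using dr[OF False] EH by simp
  qed
  then show ?case by (simp add: hit_trunc_0 ennreal_leI)
next
  case (Suc n)
  show ?case
  proof (cases "x = \<theta>")
    case True
    show ?thesis unfolding path_pmf_Suc_first by (simp add: hit_trunc_Cons True s\<theta>)
  next
    case False
    have "(\<integral>\<^sup>+ xs. ennreal (\<Sum>t\<le>hit_trunc \<theta> (Suc n) xs. s (xs ! t)) \<partial>measure_pmf (path_pmf K x (Suc n)))
       = (\<integral>\<^sup>+ y. \<integral>\<^sup>+ ys. ennreal (s x) + ennreal (\<Sum>t\<le>hit_trunc \<theta> n ys. s (ys ! t)) \<partial>measure_pmf (path_pmf K y n) \<partial>measure_pmf (K x))"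
      unfolding path_pmf_Suc_first
      by (simp add: hit_trunc_Cons False sum_Cons_shift s0 sum_nonneg ennreal_plus[symmetric] del: ennreal_plus sum.atMost_Suc)
    also have "\<dots> = (\<integral>\<^sup>+ y. ennreal (s x) + \<integral>\<^sup>+ ys. ennreal (\<Sum>t\<le>hit_trunc \<theta> n ys. s (ys ! t)) \<partial>measure_pmf (path_pmf K y n) \<partial>measure_pmf (K x))"
      by (intro nn_integral_cong) (simp add: nn_integral_add measure_pmf.emeasure_space_1)
    also have "\<dots> \<le> (\<integral>\<^sup>+ y. ennreal (s x) + ennreal (H y) \<partial>measure_pmf (K x))"
      by (intro nn_integral_mono add_left_mono Suc.IH)
    also have "\<dots> = ennreal (s x) + ennreal (measure_pmf.expectation (K x) H)"
      using H0 by (simp add: nn_integral_add nn_integral_finite_expect[OF fin] measure_pmf.emeasure_space_1)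
    also have "\<dots> = ennreal (s x + measure_pmf.expectation (K x) H)"
      using s0[of x] by (simp add: integral_nonneg_AE H0 ennreal_plus)
    also have "\<dots> \<le> ennreal (H x)" by (intro ennreal_leI dr False)
    finally show ?thesis .
  qed
qed


lemma pmf_bind_ge:
  assumes "finite (set_pmf M)"
  shows "pmf (bind_pmf M N) y \<ge> pmf M m * pmf (N m) y"
proof -
  have "pmf (bind_pmf M N) y = (\<Sum>x\<in>insert m (set_pmf M). pmf (N x) y * pmf M x)"
    unfolding pmf_bind by (rule expectation_finite) (use assms in auto)
  also have "\<dots> \<ge> pmf (N m) y * pmf M m"
    by (rule member_le_sum) (use assms in auto)
  finally show ?thesis by (simp add: mult.commute)
qed

lemma expect_bind_return:
  fixes f :: "'b \<Rightarrow> real"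
  shows "measure_pmf.expectation (bind_pmf M (\<lambda>x. return_pmf (h x))) f = measure_pmf.expectation M (\<lambda>x. f (h x))"
  by (simp add: map_pmf_def[symmetric])

lemma kstep_drift_iter:
  fixes V' :: "'s \<Rightarrow> real"
  assumes fin: "\<And>x. finite (set_pmf (K x))" and V0: "\<And>x. V' x \<ge> 0"
    and dr: "\<And>x. measure_pmf.expectation (K x) V' \<le> l * V' x + k"
    and l: "0 \<le> l" "l < 1" and k: "k \<ge> 0"
  shows "measure_pmf.expectation (kstep K x n) V' \<le> V' x + k / (1 - l)"
proof (induction n arbitrary: x)
  case 0 then show ?case using k l by simp
next
  case (Suc n)
  have "measure_pmf.expectation (kstep K x (Suc n)) V' = measure_pmf.expectation (kstep K x n) (\<lambda>z. measure_pmf.expectation (K z) V')"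
    unfolding kstep.simps by (rule expectation_bind_finite[OF finite_kstep[OF fin] fin])
  also have "\<dots> \<le> measure_pmf.expectation (kstep K x n) (\<lambda>z. l * V' z + k)"
    by (rule integral_mono) (auto intro: integrable_measure_pmf_finite[OF finite_kstep[OF fin]] dr)
  also have "\<dots> = l * measure_pmf.expectation (kstep K x n) V' + k"
    by (simp add: integrable_measure_pmf_finite[OF finite_kstep[OF fin]])
  also have "\<dots> \<le> l * (V' x + k / (1 - l)) + k"
    using Suc.IH[of x] l by (simp add: mult_left_mono)
  also have "\<dots> \<le> V' x + k / (1 - l)"
  proof -
    have "l * V' x \<le> V' x" using l V0[of x] by (simp add: mult_left_le_one_le)
    moreover have "l * (k / (1 - l)) + k = k / (1 - l)" using l by (simp add: field_simps)
    ultimately show ?thesis by (simp add: algebra_simps)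
  qed
  finally show ?case .
qed

context harris
begin

lemma stat_moment:
  fixes V' :: "'s \<Rightarrow> real"
  assumes V0: "\<And>x. V' x \<ge> 0" and bd: "\<And>n. Pn n V' \<theta> \<le> Bm"
  shows "integrable (measure_pmf stat) V'" "measure_pmf.expectation stat V' \<le> Bm"
proof -
  have fs: "(\<Sum>y\<in>F. \<bar>\<pi>0 y * V' y\<bar>) \<le> Bm" if F: "finite F" for F
  proof -
    have "(\<lambda>n. \<Sum>y\<in>F. X n y * V' y) \<longlonglongrightarrow> (\<Sum>y\<in>F. \<pi>0 y * V' y)"
      by (intro tendsto_intros X_conv)
    moreover have "(\<Sum>y\<in>F. X n y * V' y) \<le> Bm" for n
    proof -
      have "(\<Sum>y\<in>F. X n y * V' y) = (\<Sum>y\<in>F. V' y * X n y)" by (simp add: mult.commute)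
      also have "\<dots> \<le> (\<Sum>y\<in>F \<union> set_pmf (kstep K \<theta> n). V' y * X n y)"
        by (rule sum_mono2) (use F fin_k V0 in auto)
      also have "\<dots> = Pn n V' \<theta>" unfolding Pn_def by (rule expectation_finite[symmetric]) (use F fin_k in auto)
      finally show ?thesis using bd[of n] by simp
    qed
    ultimately have "(\<Sum>y\<in>F. \<pi>0 y * V' y) \<le> Bm" by (intro LIMSEQ_le_const2) auto
    then show ?thesis using \<pi>0_nonneg V0 by (simp add: abs_mult)
  qed
  have s: "(\<lambda>y. \<pi>0 y * V' y) abs_summable_on UNIV" by (rule fin_sums_bound(1)[OF fs])
  show "integrable (measure_pmf stat) V'" unfolding integrable_pmf_iff pmf_stat by (rule s)
  have "measure_pmf.expectation stat V' = infsetsum (\<lambda>y. \<pi>0 y * V' y) UNIV"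
    by (simp add: pmf_expectation_eq_infsetsum pmf_stat)
  also have "\<dots> = infsetsum (\<lambda>y. \<bar>\<pi>0 y * V' y\<bar>) UNIV" using \<pi>0_nonneg V0 by (simp add: abs_mult)
  also have "\<dots> \<le> Bm" by (rule fin_sums_bound(2)[OF fs])
  finally show "measure_pmf.expectation stat V' \<le> Bm" .
qed

lemma stat_w: "measure_pmf.expectation stat w \<le> C2 + w \<theta>" "integrable (measure_pmf stat) w"
proof -
  have gb: "\<bar>w z\<bar> \<le> 1 * w z" for z using w_ge[of z] by simp
  show "integrable (measure_pmf stat) w" by (rule stat_approx(1)[OF _ gb]) simp
  show "measure_pmf.expectation stat w \<le> C2 + w \<theta>"
    using stat_approx(2)[OF _ gb, of 0] by (simp add: Pn_0)
qed

end

locale queue =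
  fixes p a :: real and q :: "'i::{finite,linorder} \<Rightarrow> real"
  assumes p_pos: "0 < p" and p_lt1: "p < 1"
    and q_lt1: "\<forall>i. q i < 1"
    and q_dec: "\<forall>i j. i < j \<longrightarrow> q j < q i"
    and q_gt: "2 * p < q (Max UNIV)"
    and a_pos: "a > 0"
    and a_cond: "p * (exp a - 1) < q (Max UNIV) / 2 * (1 - exp (- a))"
begin

definition "qm = q (Max UNIV)"
definition "\<epsilon> = p * (exp a - 1)"
definition "c = qm * (1 - exp (- a))"
definition "lam3 = exp (- c) * (1 + \<epsilon>)"
definition "M x i = (if x i = 0 then return_pmf 0 else binomial_pmf (x i) (q i / real (x i)))"
definition "new v x \<xi> D = (\<lambda>i. x i - D i + (if v x = i \<and> \<xi> then 1 else 0))"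
definition V3 :: "'i qstate \<Rightarrow> real" where "V3 x = exp (a * (\<Sum>i\<in>UNIV. real (x i)))"

lemma q_ge: "q i \<ge> qm"
proof -
  have "i \<le> Max UNIV" by simp
  then show ?thesis using q_dec unfolding qm_def by (cases "i = Max UNIV") (auto simp: order.order_iff_strict)
qed

lemma qm_pos: "qm > 0" using q_gt p_pos by (simp add: qm_def)
lemma q_pos: "q i > 0" using q_ge[of i] qm_pos by simp
lemma q_lt: "q i < 1" using q_lt1 by simp

lemma kernel_eq: "queue_kernel p q v x = bind_pmf (bernoulli_pmf p) (\<lambda>\<xi>. bind_pmf (Pi_pmf UNIV 0 (M x)) (\<lambda>D. return_pmf (new v x \<xi> D)))"
  unfolding queue_kernel_def M_def new_def ..

lemma r_props: "x i \<noteq> 0 \<Longrightarrow> 0 < q i / real (x i) \<and> q i / real (x i) < 1"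
  using q_pos[of i] q_lt[of i] by (auto simp: field_simps)

lemma set_M: "set_pmf (M x i) \<subseteq> {..x i}"
  using r_props[of x i] by (auto simp: M_def)

lemma fin_M: "finite (set_pmf (M x i))" using set_M finite_subset by blast

lemma fin_Pi: "finite (set_pmf (Pi_pmf UNIV 0 (M x)))"
  by (simp add: set_Pi_pmf) (intro finite_PiE_dflt, auto simp: fin_M)

lemma fin_K: "finite (set_pmf (queue_kernel p q v x))"
  unfolding kernel_eq using fin_Pi by simp

lemma expect_K:
  fixes f :: "'i qstate \<Rightarrow> real"
  shows "measure_pmf.expectation (queue_kernel p q v x) f =
    p * measure_pmf.expectation (Pi_pmf UNIV 0 (M x)) (\<lambda>D. f (new v x True D))
  + (1 - p) * measure_pmf.expectation (Pi_pmf UNIV 0 (M x)) (\<lambda>D. f (new v x False D))"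
  unfolding kernel_eq
  by (subst expectation_bind_finite) (use fin_Pi p_pos p_lt1 in \<open>auto simp: expect_bind_return\<close>)

lemma expect_Pi_comp:
  fixes g :: "nat \<Rightarrow> real"
  shows "measure_pmf.expectation (Pi_pmf UNIV 0 (M x)) (\<lambda>D. g (D i)) = measure_pmf.expectation (M x i) g"
proof -
  have "map_pmf (\<lambda>D. D i) (Pi_pmf UNIV 0 (M x)) = M x i" by (simp add: Pi_pmf_component)
  then show ?thesis by (metis integral_map_pmf)
qed


lemma binom_mgf:
  assumes r: "0 \<le> r" "r \<le> 1"
  shows "measure_pmf.expectation (binomial_pmf n r) (\<lambda>d. exp (a * real (n - d))) = (r + exp a * (1 - r)) ^ n"
proof -
  have "measure_pmf.expectation (binomial_pmf n r) (\<lambda>d. exp (a * real (n - d)))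
      = (\<Sum>k\<le>n. exp (a * real (n - k)) * ((n choose k) * r ^ k * (1 - r) ^ (n - k)))"
    by (subst integral_measure_pmf_real[of "{..n}"]) (use r in \<open>auto simp: set_pmf_binomial_eq split: if_splits\<close>)
  also have "\<dots> = (\<Sum>k\<le>n. (n choose k) * r ^ k * (exp a * (1 - r)) ^ (n - k))"
    by (rule sum.cong) (auto simp: exp_of_nat_mult[symmetric] power_mult_distrib mult.commute)
  also have "\<dots> = (r + exp a * (1 - r)) ^ n" by (subst binomial_ring) (simp add: atLeast0AtMost)
  finally show ?thesis .
qed

lemma M_exp:
  "measure_pmf.expectation (M x i) (\<lambda>d. exp (a * real (x i - d))) \<le> (if x i = 0 then 1 else exp (- c) * exp (a * real (x i)))"
proof (cases "x i = 0")
  case True then show ?thesis by (simp add: M_def)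
next
  case False
  define n where "n = x i"
  define r where "r = q i / real n"
  have n: "n \<ge> 1" using False by (simp add: n_def)
  have r: "0 < r" "r < 1" using r_props[of x i, OF False] by (simp_all add: r_def n_def)
  have "measure_pmf.expectation (M x i) (\<lambda>d. exp (a * real (x i - d))) = (r + exp a * (1 - r)) ^ n"
    using False r by (simp add: M_def binom_mgf r_def n_def)
  also have "r + exp a * (1 - r) = exp a * (1 - r * (1 - exp (- a)))"
    by (simp add: algebra_simps exp_minus field_simps)
  also have "(exp a * (1 - r * (1 - exp (- a)))) ^ n = exp (a * real n) * (1 - r * (1 - exp (- a))) ^ n"
    by (simp add: power_mult_distrib exp_of_nat_mult[symmetric] mult.commute)
  also have "(1 - r * (1 - exp (- a))) ^ n \<le> exp (- (r * (1 - exp (- a)))) ^ n"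
  proof (rule power_mono)
    show "1 - r * (1 - exp (- a)) \<le> exp (- (r * (1 - exp (- a))))"
      using exp_ge_add_one_self[of "- (r * (1 - exp (- a)))"] by simp
    have "r * (1 - exp (- a)) \<le> 1 * 1" using r a_pos by (intro mult_mono) auto
    then show "0 \<le> 1 - r * (1 - exp (- a))" by simp
  qed
  also have "exp (- (r * (1 - exp (- a)))) ^ n = exp (- (q i * (1 - exp (- a))))"
    using n by (simp add: exp_of_nat_mult[symmetric] r_def field_simps)
  also have "\<dots> \<le> exp (- c)"
    unfolding c_def using q_ge[of i] a_pos by (auto intro!: mult_right_mono)
  finally show ?thesis using False
    by (simp add: n_def mult.commute mult_left_mono)
qed


definition mexp :: "'i qstate \<Rightarrow> 'i \<Rightarrow> real" where "mexp x i = measure_pmf.expectation (M x i) (\<lambda>d. exp (a * real (x i - d)))"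
definition "del v x \<xi> i = (if v x = i \<and> \<xi> then 1 else (0::nat))"

lemma eps_pos: "\<epsilon> > 0" using p_pos a_pos by (simp add: \<epsilon>_def)

lemma mexp_nonneg: "mexp x i \<ge> 0" unfolding mexp_def by (rule integral_nonneg_AE) auto

lemma new_comp: "exp (a * real (new v x \<xi> D i)) = exp (a * real (x i - D i)) * exp (a * real (del v x \<xi> i))"
  by (simp add: new_def del_def exp_add[symmetric] algebra_simps)

lemma E_Pi_comp_exp:
  "measure_pmf.expectation (Pi_pmf UNIV 0 (M x)) (\<lambda>D. exp (a * real (new v x \<xi> D i))) = mexp x i * exp (a * real (del v x \<xi> i))"
proof -
  have "measure_pmf.expectation (Pi_pmf UNIV 0 (M x)) (\<lambda>D. exp (a * real (new v x \<xi> D i)))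
      = measure_pmf.expectation (Pi_pmf UNIV 0 (M x)) (\<lambda>D. (\<lambda>d. exp (a * real (x i - d)) * exp (a * real (del v x \<xi> i))) (D i))"
    by (simp add: new_comp)
  also have "\<dots> = measure_pmf.expectation (M x i) (\<lambda>d. exp (a * real (x i - d)) * exp (a * real (del v x \<xi> i)))"
    by (rule expect_Pi_comp)
  also have "\<dots> = mexp x i * exp (a * real (del v x \<xi> i))" by (simp add: mexp_def)
  finally show ?thesis .
qed

lemma sum_del: fixes v :: "'i qstate \<Rightarrow> 'i" shows "(\<Sum>i\<in>UNIV. real (del v x \<xi> i)) = (if \<xi> then 1 else 0)"
proof (cases \<xi>)
  case True
  have "(\<Sum>i\<in>UNIV. real (del v x \<xi> i)) = (\<Sum>i\<in>UNIV. if v x = i then 1 else 0)"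
    by (rule sum.cong) (auto simp: del_def True)
  also have "\<dots> = 1" by (subst sum.delta') auto
  finally show ?thesis using True by simp
qed (simp add: del_def)

lemma E_Phi: fixes v :: "'i qstate \<Rightarrow> 'i" shows "measure_pmf.expectation (queue_kernel p q v x) (Phi a) \<le> lam3 * Phi a x + (1 + \<epsilon>) * real CARD('i)"
proof -
  have EPi: "measure_pmf.expectation (Pi_pmf UNIV 0 (M x)) (\<lambda>D. Phi a (new v x \<xi> D)) = (\<Sum>i\<in>UNIV. mexp x i * exp (a * real (del v x \<xi> i)))" for \<xi>
    unfolding Phi_def
  proof -
    have "measure_pmf.expectation (Pi_pmf UNIV 0 (M x)) (\<lambda>D. \<Sum>i\<in>UNIV. exp (a * real (new v x \<xi> D i)))
        = (\<Sum>i\<in>UNIV. measure_pmf.expectation (Pi_pmf UNIV 0 (M x)) (\<lambda>D. exp (a * real (new v x \<xi> D i))))"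
      by (rule Bochner_Integration.integral_sum) (rule integrable_measure_pmf_finite[OF fin_Pi])
    then show "measure_pmf.expectation (Pi_pmf UNIV 0 (M x)) (\<lambda>D. \<Sum>i\<in>UNIV. exp (a * real (new v x \<xi> D i))) = (\<Sum>i\<in>UNIV. mexp x i * exp (a * real (del v x \<xi> i)))"
      by (simp add: E_Pi_comp_exp)
  qed
  have "measure_pmf.expectation (queue_kernel p q v x) (Phi a)
     = (\<Sum>i\<in>UNIV. mexp x i * (p * exp (a * real (del v x True i)) + (1 - p)))"
  proof -
    have "measure_pmf.expectation (queue_kernel p q v x) (Phi a) = p * (\<Sum>i\<in>UNIV. mexp x i * exp (a * real (del v x True i))) + (1 - p) * (\<Sum>i\<in>UNIV. mexp x i)"
      by (simp add: expect_K EPi del_def)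
    also have "\<dots> = (\<Sum>i\<in>UNIV. mexp x i * (p * exp (a * real (del v x True i)) + (1 - p)))"
      unfolding sum_distrib_left sum.distrib[symmetric] by (rule sum.cong) (simp_all add: algebra_simps)
    finally show ?thesis .
  qed
  also have "\<dots> \<le> (\<Sum>i\<in>UNIV. mexp x i * (1 + \<epsilon>))"
  proof (rule sum_mono, rule mult_left_mono[OF _ mexp_nonneg])
    fix i
    show "p * exp (a * real (del v x True i)) + (1 - p) \<le> 1 + \<epsilon>"
      using eps_pos by (simp add: del_def \<epsilon>_def algebra_simps)
  qed
  also have "\<dots> \<le> (\<Sum>i\<in>UNIV. (exp (- c) * exp (a * real (x i)) + 1) * (1 + \<epsilon>))"
  proof (rule sum_mono, rule mult_right_mono)
    fix i
    show "mexp x i \<le> exp (- c) * exp (a * real (x i)) + 1"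
      using M_exp[of x i] unfolding mexp_def by (auto split: if_splits)
  qed (use eps_pos in auto)
  also have "\<dots> = lam3 * Phi a x + (1 + \<epsilon>) * real CARD('i)"
    by (simp add: lam3_def Phi_def sum_distrib_left sum_distrib_right sum.distrib algebra_simps)
  finally show ?thesis .
qed


lemma V3_prod: "V3 y = (\<Prod>i\<in>UNIV. exp (a * real (y i)))"
  by (simp add: V3_def sum_distrib_left exp_sum)

lemma E_V3: fixes v :: "'i qstate \<Rightarrow> 'i"
  shows "measure_pmf.expectation (queue_kernel p q v x) V3 = (1 + \<epsilon>) * (\<Prod>i\<in>UNIV. mexp x i)"
proof -
  have EPi: "measure_pmf.expectation (Pi_pmf UNIV 0 (M x)) (\<lambda>D. V3 (new v x \<xi> D)) = (\<Prod>i\<in>UNIV. mexp x i) * exp (a * (if \<xi> then 1 else 0))" for \<xi>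
  proof -
    have "measure_pmf.expectation (Pi_pmf UNIV 0 (M x)) (\<lambda>D. V3 (new v x \<xi> D))
       = measure_pmf.expectation (Pi_pmf UNIV 0 (M x)) (\<lambda>D. \<Prod>i\<in>UNIV. (\<lambda>i d. exp (a * real (x i - d)) * exp (a * real (del v x \<xi> i))) i (D i))"
      by (simp add: V3_prod new_comp)
    also have "\<dots> = (\<Prod>i\<in>UNIV. measure_pmf.expectation (M x i) (\<lambda>d. exp (a * real (x i - d)) * exp (a * real (del v x \<xi> i))))"
      by (rule expectation_prod_Pi_pmf) (auto intro: integrable_measure_pmf_finite[OF fin_M])
    also have "\<dots> = (\<Prod>i\<in>UNIV. mexp x i * exp (a * real (del v x \<xi> i)))" by (simp add: mexp_def)
    also have "\<dots> = (\<Prod>i\<in>UNIV. mexp x i) * exp (a * (\<Sum>i\<in>UNIV. real (del v x \<xi> i)))"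
      by (simp add: prod.distrib sum_distrib_left exp_sum)
    finally show ?thesis by (simp add: sum_del)
  qed
  show ?thesis by (simp add: expect_K EPi \<epsilon>_def algebra_simps)
qed

lemma c_pos: "c > 0" using qm_pos a_pos by (simp add: c_def)

lemma mexp_le: "mexp x i \<le> exp (a * real (x i))"
proof -
  have e: "exp (- c) * exp (a * real (x i)) \<le> exp (a * real (x i))" using c_pos by simp
  show ?thesis using M_exp[of x i] order_trans[OF _ e] unfolding mexp_def by (auto split: if_splits)
qed

lemma prod_mexp_le: assumes "x \<noteq> (\<lambda>_. 0)" shows "(\<Prod>i\<in>UNIV. mexp x i) \<le> exp (- c) * V3 x"
proof -
  obtain k where k: "x k \<noteq> 0" using assms by auto
  have "(\<Prod>i\<in>UNIV. mexp x i) = mexp x k * (\<Prod>i\<in>UNIV - {k}. mexp x i)" by (simp add: prod.remove)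
  also have "\<dots> \<le> (exp (- c) * exp (a * real (x k))) * (\<Prod>i\<in>UNIV - {k}. exp (a * real (x i)))"
  proof (rule mult_mono)
    show "mexp x k \<le> exp (- c) * exp (a * real (x k))" using M_exp[of x k] k unfolding mexp_def by simp
    show "(\<Prod>i\<in>UNIV - {k}. mexp x i) \<le> (\<Prod>i\<in>UNIV - {k}. exp (a * real (x i)))"
      by (rule prod_mono) (use mexp_nonneg mexp_le in auto)
  qed (auto intro: prod_nonneg mexp_nonneg)
  also have "\<dots> = exp (- c) * V3 x" by (simp add: V3_prod prod.remove[of UNIV k] mult_ac)
  finally show ?thesis .
qed

lemma prod_mexp_le': "(\<Prod>i\<in>UNIV. mexp x i) \<le> V3 x"
  unfolding V3_prod by (rule prod_mono) (use mexp_nonneg mexp_le in auto)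

lemma V3_ge: "V3 x \<ge> 1" using a_pos by (simp add: V3_def sum_nonneg)


lemma eps_lt: "\<epsilon> < c / 2" using a_cond by (simp add: \<epsilon>_def c_def qm_def)

lemma lam3_lt1: "lam3 < 1"
proof -
  have "1 + \<epsilon> < 1 + c" using eps_lt c_pos by simp
  also have "\<dots> \<le> exp c" by (rule exp_ge_add_one_self)
  finally have "1 + \<epsilon> < exp c" .
  then show ?thesis unfolding lam3_def by (simp add: exp_minus field_simps)
qed

lemma lam3_pos: "lam3 > 0" using eps_pos by (simp add: lam3_def add_pos_pos)

lemma drift_V3: fixes v :: "'i qstate \<Rightarrow> 'i"
  assumes "x \<noteq> (\<lambda>_. 0)" shows "measure_pmf.expectation (queue_kernel p q v x) V3 \<le> lam3 * V3 x"
  unfolding E_V3 lam3_def using prod_mexp_le[OF assms] eps_pos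
  by (simp add: mult.assoc mult_left_mono)

lemma drift_V3': fixes v :: "'i qstate \<Rightarrow> 'i"
  shows "measure_pmf.expectation (queue_kernel p q v x) V3 \<le> lam3 * V3 x + (1 + \<epsilon>)"
proof (cases "x = (\<lambda>_. 0)")
  case True
  have "(\<Prod>i\<in>UNIV. mexp x i) = 1" using True by (simp add: mexp_def M_def)
  then show ?thesis using True lam3_pos V3_ge[of x] by (simp add: E_V3)
next
  case False
  then show ?thesis using drift_V3[OF False, of v] eps_pos by simp
qed

lemma pmf_M_self: "pmf (M x i) (x i) = (if x i = 0 then 1 else (q i / real (x i)) ^ x i)"
  using r_props[of x i] by (auto simp: M_def)

lemma minor_K: fixes v :: "'i qstate \<Rightarrow> 'i"
  shows "pmf (queue_kernel p q v x) (\<lambda>_. 0) \<ge> (1 - p) * (\<Prod>i\<in>UNIV. pmf (M x i) (x i))"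
proof -
  have "pmf (queue_kernel p q v x) (\<lambda>_. 0) \<ge> pmf (bernoulli_pmf p) False * pmf (bind_pmf (Pi_pmf UNIV 0 (M x)) (\<lambda>D. return_pmf (new v x False D))) (\<lambda>_. 0)"
    unfolding kernel_eq by (rule pmf_bind_ge) simp
  moreover have "pmf (bind_pmf (Pi_pmf UNIV 0 (M x)) (\<lambda>D. return_pmf (new v x False D))) (\<lambda>_. 0) \<ge> pmf (Pi_pmf UNIV 0 (M x)) x * pmf (return_pmf (new v x False x)) (\<lambda>_. 0)"
    by (rule pmf_bind_ge[OF fin_Pi])
  moreover have "new v x False x = (\<lambda>_. 0)" by (simp add: new_def)
  moreover have "pmf (Pi_pmf UNIV 0 (M x)) x = (\<Prod>i\<in>UNIV. pmf (M x i) (x i))" by (simp add: pmf_Pi)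
  ultimately have "pmf (queue_kernel p q v x) (\<lambda>_. 0) \<ge> (1 - p) * pmf (bind_pmf (Pi_pmf UNIV 0 (M x)) (\<lambda>D. return_pmf (new v x False D))) (\<lambda>_. 0)"
    and "pmf (bind_pmf (Pi_pmf UNIV 0 (M x)) (\<lambda>D. return_pmf (new v x False D))) (\<lambda>_. 0) \<ge> (\<Prod>i\<in>UNIV. pmf (M x i) (x i))"
    using p_pos p_lt1 by simp_all
  then show ?thesis using p_lt1 by (meson diff_ge_0_iff_ge less_imp_le mult_left_mono order_trans)
qed

lemma prod_M_pos: fixes x :: "'i qstate" shows "(\<Prod>i\<in>UNIV. pmf (M x i) (x i)) > 0"
  by (rule prod_pos) (use q_pos in \<open>auto simp: pmf_M_self\<close>)

lemma prod_M_lower: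
  fixes x :: "'i qstate"
  assumes N: "N \<ge> 1" and xN: "\<And>i. x i \<le> N"
  shows "(\<Prod>i\<in>UNIV. pmf (M x i) (x i)) \<ge> ((qm / real N) ^ N) ^ CARD('i)"
proof -
  have b: "0 < qm / real N" "qm / real N \<le> 1" using qm_pos N q_lt[of "Max UNIV"] by (auto simp: qm_def field_simps)
  have "(\<Prod>i\<in>(UNIV::'i set). (qm / real N) ^ N) \<le> (\<Prod>i\<in>UNIV. pmf (M x i) (x i))"
  proof (rule prod_mono)
    fix i :: 'i
    have "0 \<le> (qm / real N) ^ N" using b by simp
    moreover have "(qm / real N) ^ N \<le> pmf (M x i) (x i)"
    proof (cases "x i = 0")
      case True then show ?thesis using b pmf_M_self[of x i] by (simp add: power_le_one)
    next
      case False
      have "(qm / real N) ^ N \<le> (qm / real N) ^ x i"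
        using b xN[of i] by (intro power_decreasing) auto
      also have "\<dots> \<le> (q i / real (x i)) ^ x i"
        using b q_ge[of i] xN[of i] False qm_pos by (intro power_mono frac_le) auto
      finally show ?thesis using False by (simp add: pmf_M_self)
    qed
    ultimately show "0 \<le> (qm / real N) ^ N \<and> (qm / real N) ^ N \<le> pmf (M x i) (x i)" by simp
  qed
  then show ?thesis by simp
qed

lemma Phi_bound_coord: "Phi a x \<le> R \<Longrightarrow> real (x i) \<le> R / a"
proof -
  assume R: "Phi a x \<le> R"
  have "exp (a * real (x i)) \<le> Phi a x" unfolding Phi_def by (rule member_le_sum) auto
  moreover have "a * real (x i) \<le> exp (a * real (x i))"
    using exp_ge_add_one_self[of "a * real (x i)"] by linarith
  ultimately show ?thesis using R a_pos by (simp add: field_simps)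
qed


definition "KcQ = (1 + \<epsilon>) * real CARD('i)"
definition "Rq = 8 * KcQ / (1 - lam3)"
definition "Nq = nat \<lceil>Rq / a\<rceil>"
definition "\<alpha>q = (1 - p) * ((qm / real Nq) ^ Nq) ^ CARD('i)"

lemma KcQ_pos: "KcQ > 0" using eps_pos by (simp add: KcQ_def)
lemma Rq_pos: "Rq > 0" using KcQ_pos lam3_lt1 by (simp add: Rq_def)
lemma Nq_ge1: "Nq \<ge> 1"
proof -
  have "0 < Rq / a" using Rq_pos a_pos by simp
  then have "0 < \<lceil>Rq / a\<rceil>" by simp
  then have "1 \<le> \<lceil>Rq / a\<rceil>" by simp
  then show ?thesis unfolding Nq_def by (simp add: le_nat_iff)
qed

lemma Phi_ge1: "Phi a (x :: 'i qstate) \<ge> 1"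
proof -
  have e1: "exp (a * real (x undefined)) \<le> Phi a x" unfolding Phi_def by (rule member_le_sum) auto
  have e2: "1 \<le> exp (a * real (x undefined))" using a_pos by simp
  show ?thesis using order_trans[OF e2 e1] .
qed

lemma \<alpha>q_pos: "\<alpha>q > 0"
  using p_lt1 qm_pos Nq_ge1 by (simp add: \<alpha>q_def)

lemma \<alpha>q_le1: "\<alpha>q \<le> 1"
proof -
  have b: "qm / real Nq \<le> 1" using Nq_ge1 q_lt[of "Max UNIV"] by (simp add: qm_def field_simps)
  have "((qm / real Nq) ^ Nq) ^ CARD('i) \<le> 1"
    using b qm_pos by (intro power_le_one) (auto simp: power_le_one)
  moreover have "0 \<le> ((qm / real Nq) ^ Nq) ^ CARD('i)" using qm_pos by simp
  ultimately show ?thesis using p_pos p_lt1 unfolding \<alpha>q_def by (intro mult_le_one) auto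
qed

lemma harris_inst: fixes v :: "'i qstate \<Rightarrow> 'i"
  shows "harris (queue_kernel p q v) (Phi a) (\<lambda>_. 0) lam3 KcQ \<alpha>q"
proof
  show "\<And>x. finite (set_pmf (queue_kernel p q v x))" by (rule fin_K)
  show "\<And>x :: 'i qstate. 1 \<le> Phi a x" by (rule Phi_ge1)
  show "\<And>x. measure_pmf.expectation (queue_kernel p q v x) (Phi a) \<le> lam3 * Phi a x + KcQ"
    unfolding KcQ_def by (rule E_Phi)
  show "0 \<le> lam3" "lam3 < 1" "0 < KcQ" "0 < \<alpha>q" "\<alpha>q \<le> 1"
    using lam3_pos lam3_lt1 KcQ_pos \<alpha>q_pos \<alpha>q_le1 by auto
  fix x :: "'i qstate"
  assume R: "Phi a x \<le> 8 * KcQ / (1 - lam3)"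
  have xN: "x i \<le> Nq" for i
  proof -
    have "real (x i) \<le> Rq / a" using Phi_bound_coord[of x Rq i] R by (simp add: Rq_def)
    also have "\<dots> \<le> real_of_int \<lceil>Rq / a\<rceil>" by (rule le_of_int_ceiling)
    finally have "int (x i) \<le> \<lceil>Rq / a\<rceil>" by linarith
    moreover have "0 \<le> \<lceil>Rq / a\<rceil>"
    proof -
      have "0 < Rq / a" using Rq_pos a_pos by simp
      then show ?thesis by simp
    qed
    ultimately show ?thesis unfolding Nq_def by (subst le_nat_iff) auto
  qed
  have "\<alpha>q \<le> (1 - p) * (\<Prod>i\<in>UNIV. pmf (M x i) (x i))"
    unfolding \<alpha>q_def using p_lt1 by (intro mult_left_mono prod_M_lower[OF Nq_ge1 xN]) auto
  also have "\<dots> \<le> pmf (queue_kernel p q v x) (\<lambda>_. 0)" by (rule minor_K)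
  finally show "\<alpha>q \<le> pmf (queue_kernel p q v x) (\<lambda>_. 0)" .
qed

end


lemma finite_path: "(\<And>x. finite (set_pmf (K x))) \<Longrightarrow> finite (set_pmf (path_pmf K x n))"
  by (induction n) auto

lemma path_support_pos:
  assumes fin: "\<And>x. finite (set_pmf (K x))"
  shows "ys \<in> set_pmf (path_pmf K y n) \<Longrightarrow> j \<le> n \<Longrightarrow> pmf (kstep K y j) (ys ! j) > 0"
proof (induction n arbitrary: ys j)
  case 0 then show ?case by simp
next
  case (Suc n)
  then obtain zs z where zs: "zs \<in> set_pmf (path_pmf K y n)" "z \<in> set_pmf (K (last zs))" "ys = zs @ [z]"
    by auto
  have lz: "length zs = Suc n" using set_path_pmf[OF zs(1)] by simp
  show ?case
  proof (cases "j \<le> n")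
    case True
    then have "ys ! j = zs ! j" using zs(3) lz by (simp add: nth_append)
    then show ?thesis using Suc.IH[OF zs(1) True] by simp
  next
    case False
    then have j: "j = Suc n" using Suc.prems by simp
    have ysj: "ys ! j = z" using zs(3) lz j by (metis nth_append_length)
    have lastz: "last zs = zs ! n"
    proof -
      have "zs \<noteq> []" using lz by auto
      then show ?thesis using lz by (simp add: last_conv_nth)
    qed
    have "pmf (kstep K y (Suc n)) z \<ge> pmf (kstep K y n) (zs ! n) * pmf (K (zs ! n)) z"
      unfolding kstep.simps by (rule pmf_bind_ge[OF finite_kstep[OF fin]])
    moreover have "pmf (kstep K y n) (zs ! n) > 0" using Suc.IH[OF zs(1), of n] by simp
    moreover have "pmf (K (zs ! n)) z > 0" using zs(2) unfolding lastz by (rule pmf_positive)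
    ultimately show ?thesis using ysj j by (smt (verit) mult_pos_pos)
  qed
qed

lemma accessible_trans:
  assumes fin: "\<And>x. finite (set_pmf (K x))"
  shows "accessible K x y \<Longrightarrow> accessible K y z \<Longrightarrow> accessible K x z"
proof -
  assume "accessible K x y" "accessible K y z"
  then obtain m n where m: "pmf (kstep K x m) y > 0" and n: "pmf (kstep K y n) z > 0"
    by (auto simp: accessible_def)
  have "pmf (kstep K x (m + n)) z \<ge> pmf (kstep K x m) y * pmf (kstep K y n) z"
    unfolding kstep_add by (rule pmf_bind_ge[OF finite_kstep[OF fin]])
  then have "pmf (kstep K x (m + n)) z > 0" using m n by (smt (verit) mult_pos_pos)
  then show ?thesis by (auto simp: accessible_def)
qed

lemma chain_generic:
  fixes K :: "'s \<Rightarrow> 's pmf"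
  assumes fin: "\<And>x. finite (set_pmf (K x))" and pos: "\<And>x. pmf (K x) \<theta> > 0"
  defines "S \<equiv> communicating_class K \<theta>"
  shows "closed_set K S" "period K \<theta> = 1" "\<And>x. x \<notin> S \<Longrightarrow> transient K x"
proof -
  have acc: "\<And>x. accessible K x \<theta>" unfolding accessible_def using pos by (intro exI[of _ 1]) (simp add: bind_return_pmf)
  show "closed_set K S"
    unfolding closed_set_def S_def communicating_class_def
    using accessible_trans[of K, OF fin] acc by blast
  have "1 \<in> {n. n > 0 \<and> pmf (kstep K \<theta> n) \<theta> > 0}"
    using pos[of \<theta>] by (simp add: bind_return_pmf)
  then have "Gcd {n. n > 0 \<and> pmf (kstep K \<theta> n) \<theta> > 0} dvd 1" by (rule Gcd_dvd)
  then show "period K \<theta> = 1" by (simp add: period_def)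
  fix x assume xS: "x \<notin> S"
  then have nacc: "\<not> accessible K \<theta> x" using acc by (simp add: S_def communicating_class_def)
  have bound: "measure_pmf.prob (path_pmf K x n) {xs. \<exists>t\<in>{1..n}. xs ! t = x} \<le> 1 - pmf (K x) \<theta>" for n
  proof (cases n)
    case 0 then show ?thesis by (simp add: pmf_le_1)
  next
    case (Suc m)
    define A where "A = {xs. \<exists>t\<in>{1..n}. xs ! t = x}"
    define h where "h y = measure_pmf.prob (path_pmf K y m) {ys. x # ys \<in> A}" for y
    have "measure_pmf.prob (path_pmf K x n) A = measure_pmf.expectation (path_pmf K x n) (indicator A)"
      by simp
    also have "\<dots> = measure_pmf.expectation (K x) (\<lambda>y. measure_pmf.expectation (map_pmf (\<lambda>ys. x # ys) (path_pmf K y m)) (indicator A))"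
      unfolding Suc path_pmf_Suc_first
      by (rule expectation_bind_finite[OF fin]) (simp add: finite_path[OF fin])
    also have "\<dots> = measure_pmf.expectation (K x) h"
    proof (rule arg_cong[where f = "measure_pmf.expectation (K x)"], rule ext)
      fix y
      have "measure_pmf.expectation (map_pmf (\<lambda>ys. x # ys) (path_pmf K y m)) (indicator A) = measure_pmf.prob (map_pmf (\<lambda>ys. x # ys) (path_pmf K y m)) A"
        by simp
      also have "\<dots> = h y" by (simp add: h_def vimage_def)
      finally show "measure_pmf.expectation (map_pmf (\<lambda>ys. x # ys) (path_pmf K y m)) (indicator A) = h y" .
    qed
    also have "\<dots> \<le> measure_pmf.expectation (K x) (\<lambda>y. 1 - indicator {\<theta>} y)"
    proof (rule integral_mono)
      fix y
      show "h y \<le> 1 - indicator {\<theta>} y"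
      proof (cases "y = \<theta>")
        case False then show ?thesis by (simp add: h_def)
      next
        case True
        have "set_pmf (path_pmf K y m) \<inter> {ys. x # ys \<in> A} = {}"
        proof (safe)
          fix ys assume ys: "ys \<in> set_pmf (path_pmf K y m)" "x # ys \<in> A"
          then obtain t where t: "t \<in> {1..n}" "(x # ys) ! t = x" by (auto simp: A_def)
          then obtain j where j: "t = Suc j" "j \<le> m" using Suc by (cases t) auto
          have "ys ! j = x" using t j by simp
          then have "pmf (kstep K \<theta> j) x > 0" using path_support_pos[OF fin ys(1) j(2)] True by simp
          then show "ys \<in> {}" using nacc by (auto simp: accessible_def)
        qed
        then have "h y = 0" unfolding h_def by (simp add: measure_pmf_zero_iff)
        then show ?thesis using True by simp
      qed
    qed (auto intro: integrable_measure_pmf_finite[OF fin])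
    also have "\<dots> = 1 - pmf (K x) \<theta>"
      by (simp add: measure_pmf_single integrable_measure_pmf_finite[OF fin])
    finally show ?thesis by (simp add: A_def)
  qed
  have "return_prob K x \<le> 1 - pmf (K x) \<theta>"
    unfolding return_prob_def by (rule cSUP_least) (use bound in auto)
  also have "\<dots> < 1" using pos[of x] by simp
  finally show "transient K x" by (simp add: transient_def)
qed

context queue
begin

lemma pos_theta: fixes v :: "'i qstate \<Rightarrow> 'i" shows "pmf (queue_kernel p q v x) (\<lambda>_. 0) > 0"
proof -
  have "0 < (1 - p) * (\<Prod>i\<in>UNIV. pmf (M x i) (x i))" using p_lt1 prod_M_pos[of x] by simp
  then show ?thesis using minor_K[where v=v and x=x] by linarith
qed

lemma acc_theta: fixes v :: "'i qstate \<Rightarrow> 'i" shows "accessible (queue_kernel p q v) x (\<lambda>_. 0)"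
  unfolding accessible_def by (rule exI[of _ 1]) (simp add: pos_theta bind_return_pmf)

end


theorem lemma2:
  fixes p a :: real and q :: "'i::{finite,linorder} \<Rightarrow> real"
  assumes p_pos: "0 < p" and p_lt1: "p < 1"
    and q_lt1: "\<forall>i. q i < 1"
    and q_dec: "\<forall>i j. i < j \<longrightarrow> q j < q i"
    and q_gt: "2 * p < q (Max UNIV)"
    and a_pos: "a > 0"
    and a_cond: "p * (exp a - 1) < q (Max UNIV) / 2 * (1 - exp (- a))"
  shows "\<exists>\<pi> :: ('i qstate \<Rightarrow> 'i) \<Rightarrow> 'i qstate pmf.
    (\<forall>v. let K = queue_kernel p q v; \<theta> = (\<lambda>_. 0) :: 'i qstate; S = communicating_class K \<theta> in
           closed_set K S \<and> period K \<theta> = 1 \<and> (\<forall>x. x \<notin> S \<longrightarrow> transient K x)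
         \<and> stationary K (\<pi> v) \<and> (\<forall>\<pi>'. stationary K \<pi>' \<longrightarrow> \<pi>' = \<pi> v)
         \<and> geom_ergodic_on K S (\<pi> v))
  \<and> (\<exists>b > 0. \<forall>x :: 'i qstate. x \<noteq> (\<lambda>_. 0) \<longrightarrow> (\<exists>Kx :: real. \<forall>v.
        hit_expect (queue_kernel p q v) (\<lambda>_. 0) (return_pmf x)
           (\<lambda>\<tau> xs. ennreal (exp (b * real \<tau>))) \<le> ennreal Kx))
  \<and> (\<forall>f :: 'i qstate \<Rightarrow> real. (\<exists>C. \<forall>x. \<bar>f x\<bar> \<le> C * Phi a x) \<longrightarrow>
       (\<exists>K > 0. \<exists>\<eta>. 0 < \<eta> \<and> \<eta> < 1 \<and> (\<forall>v x t.
          integrable (measure_pmf (kstep (queue_kernel p q v) x t)) f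
        \<and> integrable (measure_pmf (\<pi> v)) f
        \<and> \<bar>measure_pmf.expectation (kstep (queue_kernel p q v) x t) f
             - measure_pmf.expectation (\<pi> v) f\<bar> \<le> K * (1 + Phi a x) * \<eta> ^ t)))
  \<and> (\<exists>C :: real. \<forall>v. (\<integral>\<^sup>+ x. ennreal (\<Sum>i\<in>UNIV. real (x i)) \<partial>measure_pmf (\<pi> v)) \<le> ennreal C)
  \<and> (\<forall>\<epsilon> > 0. \<exists>F :: 'i qstate set. finite F \<and> (\<forall>v. measure_pmf.prob (\<pi> v) F \<ge> 1 - \<epsilon>))
  \<and> (\<exists>C :: real. \<forall>v. hit_expect (queue_kernel p q v) (\<lambda>_. 0) (\<pi> v)
        (\<lambda>\<tau> xs. ennreal (\<Sum>t\<le>\<tau>. \<Sum>i\<in>UNIV. real ((xs ! t) i))) \<le> ennreal C)"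
proof -
  interpret Q: queue p a q using assms by unfold_locales auto
  let ?\<theta> = "(\<lambda>_. 0) :: 'i qstate"
  have HI: "\<And>v. harris (queue_kernel p q v) (Phi a) ?\<theta> Q.lam3 Q.KcQ Q.\<alpha>q" by (rule Q.harris_inst)
  have fin: "\<And>v x. finite (set_pmf (queue_kernel p q v x))" by (rule Q.fin_K)
  define \<pi> where "\<pi> v = harris.stat (queue_kernel p q v) ?\<theta>" for v
  define \<beta> where "\<beta> = harris.\<beta> Q.KcQ Q.\<alpha>q"
  define ab where "ab = harris.ab Q.lam3 Q.\<alpha>q"
  define C2 where "C2 = harris.C2 (Phi a) ?\<theta> Q.lam3 Q.KcQ Q.\<alpha>q"
  define w :: "'i qstate \<Rightarrow> real" where "w = harris.w (Phi a) Q.KcQ Q.\<alpha>q"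
  have \<beta>_pos: "\<beta> > 0" unfolding \<beta>_def by (rule harris.\<beta>_pos[OF HI])
  have ab: "0 < ab" "ab < 1" unfolding ab_def by (rule harris.ab_pos[OF HI], rule harris.ab_lt1[OF HI])
  have C2_pos: "C2 > 0" unfolding C2_def by (rule harris.C2_pos[OF HI])
  have w_eq: "w x = 1 + \<beta> * Phi a x" for x unfolding w_def \<beta>_def by (simp add: harris.w_def[OF HI])
  have Phi_ge: "Phi a x \<ge> 1" for x :: "'i qstate" by (rule Q.Phi_ge1)
  have Pn_eq: "\<And>v n g x. harris.Pn (queue_kernel p q v) n g x = measure_pmf.expectation (kstep (queue_kernel p q v) x n) g"
    by (simp add: harris.Pn_def[OF HI])
  have Ew: "measure_pmf.expectation (\<pi> v) w \<le> C2 + w ?\<theta>" "integrable (measure_pmf (\<pi> v)) w" for v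
    unfolding \<pi>_def C2_def w_def by (rule harris.stat_w[OF HI])+
  have V3m: "integrable (measure_pmf (\<pi> v)) Q.V3" "measure_pmf.expectation (\<pi> v) Q.V3 \<le> 1 + (1 + Q.\<epsilon>) / (1 - Q.lam3)" for v
  proof -
    have it: "measure_pmf.expectation (kstep (queue_kernel p q v) ?\<theta> n) Q.V3 \<le> Q.V3 ?\<theta> + (1 + Q.\<epsilon>) / (1 - Q.lam3)" for n
      by (rule kstep_drift_iter[OF fin]) (use Q.V3_ge Q.drift_V3' Q.lam3_pos Q.lam3_lt1 Q.eps_pos in \<open>auto intro: order_trans[OF zero_le_one]\<close>)
    have "Q.V3 ?\<theta> = 1" by (simp add: Q.V3_def)
    then have bd: "\<And>n. harris.Pn (queue_kernel p q v) n Q.V3 ?\<theta> \<le> 1 + (1 + Q.\<epsilon>) / (1 - Q.lam3)"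
      using it by (simp add: Pn_eq)
    show "integrable (measure_pmf (\<pi> v)) Q.V3" unfolding \<pi>_def
      by (rule harris.stat_moment(1)[OF HI _ bd]) (use Q.V3_ge in \<open>auto intro: order_trans[OF zero_le_one]\<close>)
    show "measure_pmf.expectation (\<pi> v) Q.V3 \<le> 1 + (1 + Q.\<epsilon>) / (1 - Q.lam3)" unfolding \<pi>_def
      by (rule harris.stat_moment(2)[OF HI _ bd]) (use Q.V3_ge in \<open>auto intro: order_trans[OF zero_le_one]\<close>)
  qed
  have c1: "\<forall>v. let K = queue_kernel p q v; \<theta> = (\<lambda>_. 0) :: 'i qstate; S = communicating_class K \<theta> in
           closed_set K S \<and> period K \<theta> = 1 \<and> (\<forall>x. x \<notin> S \<longrightarrow> transient K x)
         \<and> stationary K (\<pi> v) \<and> (\<forall>\<pi>'. stationary K \<pi>' \<longrightarrow> \<pi>' = \<pi> v)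
         \<and> geom_ergodic_on K S (\<pi> v)"
  proof (intro allI, unfold Let_def, intro conjI allI impI)
    fix v :: "'i qstate \<Rightarrow> 'i"
    note CG = chain_generic[of "queue_kernel p q v" ?\<theta>, OF fin Q.pos_theta]
    show "closed_set (queue_kernel p q v) (communicating_class (queue_kernel p q v) ?\<theta>)" by (rule CG(1))
    show "period (queue_kernel p q v) ?\<theta> = 1" by (rule CG(2))
    show "transient (queue_kernel p q v) x" if "x \<notin> communicating_class (queue_kernel p q v) ?\<theta>" for x
      using CG(3) that by blast
    show "stationary (queue_kernel p q v) (\<pi> v)" unfolding \<pi>_def by (rule harris.stationary_stat[OF HI])
    show "\<pi>' = \<pi> v" if "stationary (queue_kernel p q v) \<pi>'" for \<pi>' unfolding \<pi>_def by (rule harris.stat_unique[OF HI that])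
    show "geom_ergodic_on (queue_kernel p q v) (communicating_class (queue_kernel p q v) ?\<theta>) (\<pi> v)"
      unfolding geom_ergodic_on_def
      by (rule exI[of _ ab], rule exI[of _ "\<lambda>x. w x + w ?\<theta> + C2"])
         (use ab harris.tv_bound[OF HI] in \<open>auto simp: \<pi>_def ab_def w_def C2_def\<close>)
  qed
  have c2: "\<exists>b > 0. \<forall>x :: 'i qstate. x \<noteq> (\<lambda>_. 0) \<longrightarrow> (\<exists>Kx :: real. \<forall>v.
        hit_expect (queue_kernel p q v) (\<lambda>_. 0) (return_pmf x)
           (\<lambda>\<tau> xs. ennreal (exp (b * real \<tau>))) \<le> ennreal Kx)"
  proof (rule exI[of _ "- ln Q.lam3"], intro conjI allI impI)
    show "0 < - ln Q.lam3" using Q.lam3_pos Q.lam3_lt1 by simp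
    fix x :: "'i qstate" assume "x \<noteq> (\<lambda>_. 0)"
    show "\<exists>Kx. \<forall>v. hit_expect (queue_kernel p q v) (\<lambda>_. 0) (return_pmf x) (\<lambda>\<tau> xs. ennreal (exp (- ln Q.lam3 * real \<tau>))) \<le> ennreal Kx"
    proof (intro exI[of _ "Q.V3 x"] allI)
      fix v :: "'i qstate \<Rightarrow> 'i"
      have dr: "exp (- ln Q.lam3) * measure_pmf.expectation (queue_kernel p q v y) Q.V3 \<le> Q.V3 y" if "y \<noteq> ?\<theta>" for y
      proof -
        have "exp (- ln Q.lam3) * measure_pmf.expectation (queue_kernel p q v y) Q.V3 \<le> exp (- ln Q.lam3) * (Q.lam3 * Q.V3 y)"
          by (intro mult_left_mono Q.drift_V3 that) simp
        also have "\<dots> = Q.V3 y" using Q.lam3_pos by (simp add: exp_minus)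
        finally show ?thesis .
      qed
      show "hit_expect (queue_kernel p q v) (\<lambda>_. 0) (return_pmf x) (\<lambda>\<tau> xs. ennreal (exp (- ln Q.lam3 * real \<tau>))) \<le> ennreal (Q.V3 x)"
        unfolding hit_expect_def path_from_def bind_return_pmf
        by (rule SUP_least, rule hit_exp_bound[OF fin Q.V3_ge dr]) auto
    qed
  qed
  have c3: "\<forall>f :: 'i qstate \<Rightarrow> real. (\<exists>C. \<forall>x. \<bar>f x\<bar> \<le> C * Phi a x) \<longrightarrow>
       (\<exists>K > 0. \<exists>\<eta>. 0 < \<eta> \<and> \<eta> < 1 \<and> (\<forall>v x t.
          integrable (measure_pmf (kstep (queue_kernel p q v) x t)) f
        \<and> integrable (measure_pmf (\<pi> v)) f
        \<and> \<bar>measure_pmf.expectation (kstep (queue_kernel p q v) x t) f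
             - measure_pmf.expectation (\<pi> v) f\<bar> \<le> K * (1 + Phi a x) * \<eta> ^ t))"
  proof (intro allI impI)
    fix f :: "'i qstate \<Rightarrow> real"
    assume "\<exists>C. \<forall>x. \<bar>f x\<bar> \<le> C * Phi a x"
    then obtain C where C: "\<And>x. \<bar>f x\<bar> \<le> C * Phi a x" by blast
    have C0: "C \<ge> 0"
    proof (rule ccontr)
      assume "\<not> C \<ge> 0"
      then have "C * Phi a ?\<theta> < 0" using Phi_ge[of ?\<theta>] by (simp add: mult_neg_pos)
      then show False using C[of ?\<theta>] by simp
    qed
    define c where "c = C / \<beta>"
    have c0: "c \<ge> 0" using C0 \<beta>_pos by (simp add: c_def)
    have gb: "\<bar>f z\<bar> \<le> c * harris.w (Phi a) Q.KcQ Q.\<alpha>q z" for z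
    proof -
      have "c * harris.w (Phi a) Q.KcQ Q.\<alpha>q z = C / \<beta> + C * Phi a z"
        using \<beta>_pos w_eq[of z] by (simp add: c_def w_def field_simps)
      moreover have "C / \<beta> \<ge> 0" using C0 \<beta>_pos by simp
      ultimately show ?thesis using C[of z] by linarith
    qed
    define A where "A = w ?\<theta> + C2"
    have A0: "A \<ge> 0" using C2_pos w_eq[of ?\<theta>] Phi_ge[of ?\<theta>] \<beta>_pos by (simp add: A_def add_nonneg_nonneg)
    define KK where "KK = c * (1 + \<beta> + A) + 1"
    show "\<exists>K > 0. \<exists>\<eta>. 0 < \<eta> \<and> \<eta> < 1 \<and> (\<forall>v x t.
          integrable (measure_pmf (kstep (queue_kernel p q v) x t)) f
        \<and> integrable (measure_pmf (\<pi> v)) f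
        \<and> \<bar>measure_pmf.expectation (kstep (queue_kernel p q v) x t) f
             - measure_pmf.expectation (\<pi> v) f\<bar> \<le> K * (1 + Phi a x) * \<eta> ^ t)"
    proof (rule exI[of _ KK], rule conjI, goal_cases pos rest)
      case rest
      show ?case
      proof (rule exI[of _ ab], intro conjI allI)
      show "0 < ab" "ab < 1" using ab by auto
      fix v x t
      show "integrable (measure_pmf (kstep (queue_kernel p q v) x t)) f"
        by (rule integrable_measure_pmf_finite[OF finite_kstep[OF fin]])
      show "integrable (measure_pmf (\<pi> v)) f" unfolding \<pi>_def
        by (rule harris.stat_approx(1)[OF HI c0 gb])
      have cg: "\<bar>harris.Pn (queue_kernel p q v) t f x - measure_pmf.expectation (\<pi> v) f\<bar> \<le> c * (w x + w ?\<theta> + C2) * ab ^ t"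
        unfolding \<pi>_def w_def C2_def ab_def by (rule harris.conv_general[OF HI c0 gb])
      have "c * (w x + w ?\<theta> + C2) \<le> KK * (1 + Phi a x)"
      proof -
        have P0: "Phi a x \<ge> 0" using Phi_ge[of x] by simp
        have "(1 + \<beta> + A) * (1 + Phi a x) = (1 + \<beta> * Phi a x + A) + (\<beta> + Phi a x + A * Phi a x)"
          by (simp add: algebra_simps)
        moreover have "\<beta> + Phi a x + A * Phi a x \<ge> 0" using \<beta>_pos P0 A0 by (simp add: add_nonneg_nonneg)
        ultimately have "w x + w ?\<theta> + C2 \<le> (1 + \<beta> + A) * (1 + Phi a x)" by (simp add: w_eq[of x] A_def)
        then have "c * (w x + w ?\<theta> + C2) \<le> c * ((1 + \<beta> + A) * (1 + Phi a x))" by (rule mult_left_mono[OF _ c0])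
        also have "\<dots> \<le> KK * (1 + Phi a x)" unfolding KK_def using P0 by (simp add: algebra_simps)
        finally show ?thesis .
      qed
      then have "c * (w x + w ?\<theta> + C2) * ab ^ t \<le> KK * (1 + Phi a x) * ab ^ t"
        using ab by (intro mult_right_mono) auto
      with cg show "\<bar>measure_pmf.expectation (kstep (queue_kernel p q v) x t) f - measure_pmf.expectation (\<pi> v) f\<bar> \<le> KK * (1 + Phi a x) * ab ^ t"
        by (simp add: Pn_eq)
    qed
    next
      case pos
      have "0 \<le> c * (1 + \<beta> + A)" using c0 \<beta>_pos A0 by simp
      then show ?case by (simp add: KK_def)
    qed
  qed
  have sum_le: "(\<Sum>i\<in>UNIV. real (x i)) \<le> Phi a x / a" for x :: "'i qstate"
  proof -
    have "a * (\<Sum>i\<in>UNIV. real (x i)) = (\<Sum>i\<in>UNIV. a * real (x i))" by (simp add: sum_distrib_left)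
    also have "\<dots> \<le> (\<Sum>i\<in>UNIV. exp (a * real (x i)))"
      by (rule sum_mono) (use exp_ge_add_one_self in \<open>smt (verit)\<close>)
    finally show ?thesis using assms(6) by (simp add: Phi_def field_simps)
  qed
  have c4: "\<exists>C :: real. \<forall>v. (\<integral>\<^sup>+ x. ennreal (\<Sum>i\<in>UNIV. real (x i)) \<partial>measure_pmf (\<pi> v)) \<le> ennreal C"
  proof (intro exI[of _ "(C2 + w ?\<theta>) / (a * \<beta>)"] allI)
    fix v
    have le: "(\<Sum>i\<in>UNIV. real (x i)) \<le> w x / (a * \<beta>)" for x
    proof -
      have "Phi a x / a \<le> w x / (a * \<beta>)" using assms(6) \<beta>_pos by (simp add: w_eq field_simps)
      then show ?thesis using sum_le[of x] by simp
    qed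
    have "(\<integral>\<^sup>+ x. ennreal (\<Sum>i\<in>UNIV. real (x i)) \<partial>measure_pmf (\<pi> v)) \<le> (\<integral>\<^sup>+ x. ennreal (w x / (a * \<beta>)) \<partial>measure_pmf (\<pi> v))"
      by (intro nn_integral_mono ennreal_leI le)
    also have "\<dots> = ennreal (measure_pmf.expectation (\<pi> v) (\<lambda>x. w x / (a * \<beta>)))"
    proof (rule nn_integral_eq_integral)
      show "integrable (measure_pmf (\<pi> v)) (\<lambda>x. w x / (a * \<beta>))" using Ew(2)[of v] by simp
      have "0 \<le> w x / (a * \<beta>)" for x
        using w_eq[of x] Phi_ge[of x] \<beta>_pos assms(6) by simp
      then show "AE x in measure_pmf (\<pi> v). 0 \<le> w x / (a * \<beta>)" by simp
    qed
    also have "\<dots> \<le> ennreal ((C2 + w ?\<theta>) / (a * \<beta>))"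
      using Ew(1)[of v] assms(6) \<beta>_pos by (intro ennreal_leI) (simp add: divide_right_mono)
    finally show "(\<integral>\<^sup>+ x. ennreal (\<Sum>i\<in>UNIV. real (x i)) \<partial>measure_pmf (\<pi> v)) \<le> ennreal ((C2 + w ?\<theta>) / (a * \<beta>))" .
  qed
  have c5: "\<forall>\<epsilon> > 0. \<exists>F :: 'i qstate set. finite F \<and> (\<forall>v. measure_pmf.prob (\<pi> v) F \<ge> 1 - \<epsilon>)"
  proof (intro allI impI)
    fix \<epsilon> :: real assume e: "\<epsilon> > 0"
    define Mq where "Mq = (C2 + w ?\<theta>) / (\<beta> * \<epsilon>)"
    have wt0: "w ?\<theta> \<ge> 0" using w_eq[of ?\<theta>] Phi_ge[of ?\<theta>] \<beta>_pos by simp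
    have Mq0: "Mq > 0" using C2_pos wt0 \<beta>_pos e by (simp add: Mq_def)
    define N where "N = nat \<lceil>Mq / a\<rceil>"
    define F where "F = {x :: 'i qstate. Phi a x \<le> Mq}"
    have "F \<subseteq> Pi\<^sub>E UNIV (\<lambda>_. {..N})"
    proof
      fix x assume "x \<in> F"
      then have "Phi a x \<le> Mq" by (simp add: F_def)
      have "x i \<le> N" for i
      proof -
        have "real (x i) \<le> Mq / a" by (rule Q.Phi_bound_coord) fact
        also have "\<dots> \<le> real_of_int \<lceil>Mq / a\<rceil>" by (rule le_of_int_ceiling)
        finally have "int (x i) \<le> \<lceil>Mq / a\<rceil>" by linarith
        moreover have "0 \<le> \<lceil>Mq / a\<rceil>"
        proof -
          have "0 < Mq / a" using Mq0 assms(6) by simp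
          then show ?thesis by simp
        qed
        ultimately show ?thesis unfolding N_def by (subst le_nat_iff) auto
      qed
      then show "x \<in> Pi\<^sub>E UNIV (\<lambda>_. {..N})" by (simp add: PiE_UNIV_domain)
    qed
    moreover have "finite (Pi\<^sub>E (UNIV :: 'i set) (\<lambda>_. {..N}))" by (rule finite_PiE) auto
    ultimately have finF: "finite F" by (rule finite_subset)
    show "\<exists>F :: 'i qstate set. finite F \<and> (\<forall>v. measure_pmf.prob (\<pi> v) F \<ge> 1 - \<epsilon>)"
    proof (intro exI[of _ F] conjI allI finF)
      fix v
      have ind: "\<beta> * Mq * indicator (- F) x \<le> w x" for x
      proof (cases "x \<in> F")
        case True then show ?thesis using w_eq[of x] Phi_ge[of x] \<beta>_pos by simp
      next
        case False
        then have "Phi a x > Mq" by (simp add: F_def)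
        then have "\<beta> * Mq \<le> \<beta> * Phi a x" using \<beta>_pos by simp
        then show ?thesis using False w_eq[of x] by simp
      qed
      have "\<beta> * Mq * measure_pmf.prob (\<pi> v) (- F) = measure_pmf.expectation (\<pi> v) (\<lambda>x. \<beta> * Mq * indicator (- F) x)"
        by simp
      also have "\<dots> \<le> measure_pmf.expectation (\<pi> v) w"
      proof (rule integral_mono[OF _ Ew(2) ind])
        have "integrable (measure_pmf (\<pi> v)) (indicator (- F) :: _ \<Rightarrow> real)"
          by (rule measure_pmf.integrable_const_bound[where B=1]) (auto split: split_indicator)
        then show "integrable (measure_pmf (\<pi> v)) (\<lambda>x. \<beta> * Mq * indicator (- F) x)" by simp
      qed
      also have "\<dots> \<le> C2 + w ?\<theta>" by (rule Ew(1))
      also have "\<dots> = \<beta> * Mq * \<epsilon>" using \<beta>_pos e by (simp add: Mq_def)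
      finally have "measure_pmf.prob (\<pi> v) (- F) \<le> \<epsilon>" using \<beta>_pos Mq0 by simp
      moreover have "measure_pmf.prob (\<pi> v) (- F) = 1 - measure_pmf.prob (\<pi> v) F"
        using measure_pmf.prob_compl[of F "\<pi> v"] by (simp add: Compl_eq_Diff_UNIV)
      ultimately show "measure_pmf.prob (\<pi> v) F \<ge> 1 - \<epsilon>" by simp
    qed
  qed
  have c6: "\<exists>C :: real. \<forall>v. hit_expect (queue_kernel p q v) (\<lambda>_. 0) (\<pi> v)
        (\<lambda>\<tau> xs. ennreal (\<Sum>t\<le>\<tau>. \<Sum>i\<in>UNIV. real ((xs ! t) i))) \<le> ennreal C"
  proof -
    define cH where "cH = 1 / (a * (1 - Q.lam3))"
    have cH0: "cH > 0" using assms(6) Q.lam3_lt1 by (simp add: cH_def)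
    define H where "H x = cH * Q.V3 x" for x
    define sx :: "'i qstate \<Rightarrow> real" where "sx x = (\<Sum>i\<in>UNIV. real (x i))" for x
    have sV3: "sx x \<le> Q.V3 x / a" for x
    proof -
      have "a * sx x \<le> exp (a * sx x)" using exp_ge_add_one_self[of "a * sx x"] by linarith
      then show ?thesis using assms(6) by (simp add: Q.V3_def sx_def field_simps)
    qed
    have bd: "(\<integral>\<^sup>+ xs. ennreal (\<Sum>t\<le>hit_trunc ?\<theta> n xs. sx (xs ! t)) \<partial>measure_pmf (path_pmf (queue_kernel p q v) x n)) \<le> ennreal (H x)" for v n x
    proof (rule hit_sum_bound[OF fin])
      show "\<And>x. 0 \<le> H x" using cH0 Q.V3_ge by (simp add: H_def order_trans[OF zero_le_one])
      show "\<And>x. 0 \<le> sx x" by (simp add: sx_def sum_nonneg)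
      show "sx ?\<theta> = 0" by (simp add: sx_def)
      fix y :: "'i qstate" assume y: "y \<noteq> ?\<theta>"
      have "measure_pmf.expectation (queue_kernel p q v y) H = cH * measure_pmf.expectation (queue_kernel p q v y) Q.V3"
        unfolding H_def[abs_def] by simp
      also have "\<dots> \<le> cH * (Q.lam3 * Q.V3 y)" using cH0 by (intro mult_left_mono Q.drift_V3 y) auto
      finally have "sx y + measure_pmf.expectation (queue_kernel p q v y) H \<le> Q.V3 y / a + cH * (Q.lam3 * Q.V3 y)"
        using sV3[of y] by simp
      also have "\<dots> = H y" using assms(6) Q.lam3_lt1 by (simp add: H_def cH_def field_simps)
      finally show "sx y + measure_pmf.expectation (queue_kernel p q v y) H \<le> H y" .
    qed
    show ?thesis
    proof (intro exI[of _ "cH * (1 + (1 + Q.\<epsilon>) / (1 - Q.lam3))"] allI)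
      fix v
      have "(\<integral>\<^sup>+ x. ennreal (H x) \<partial>measure_pmf (\<pi> v)) = ennreal (measure_pmf.expectation (\<pi> v) H)"
      proof (rule nn_integral_eq_integral)
        show "integrable (measure_pmf (\<pi> v)) H" unfolding H_def[abs_def] using V3m(1)[of v] by simp
        have "0 \<le> H x" for x using cH0 Q.V3_ge[of x] by (simp add: H_def)
        then show "AE x in measure_pmf (\<pi> v). 0 \<le> H x" by simp
      qed
      also have "\<dots> \<le> ennreal (cH * (1 + (1 + Q.\<epsilon>) / (1 - Q.lam3)))"
      proof (intro ennreal_leI)
        have "measure_pmf.expectation (\<pi> v) H = cH * measure_pmf.expectation (\<pi> v) Q.V3"
          unfolding H_def[abs_def] by simp
        then show "measure_pmf.expectation (\<pi> v) H \<le> cH * (1 + (1 + Q.\<epsilon>) / (1 - Q.lam3))"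
          using V3m(2)[of v] cH0 by (simp add: mult_left_mono)
      qed
      finally have EH: "(\<integral>\<^sup>+ x. ennreal (H x) \<partial>measure_pmf (\<pi> v)) \<le> ennreal (cH * (1 + (1 + Q.\<epsilon>) / (1 - Q.lam3)))" .
      show "hit_expect (queue_kernel p q v) (\<lambda>_. 0) (\<pi> v) (\<lambda>\<tau> xs. ennreal (\<Sum>t\<le>\<tau>. \<Sum>i\<in>UNIV. real ((xs ! t) i))) \<le> ennreal (cH * (1 + (1 + Q.\<epsilon>) / (1 - Q.lam3)))"
        unfolding hit_expect_def path_from_def
      proof (rule SUP_least)
        fix n
        have "(\<integral>\<^sup>+ xs. ennreal (\<Sum>t\<le>hit_trunc ?\<theta> n xs. \<Sum>i\<in>UNIV. real ((xs ! t) i)) \<partial>measure_pmf (bind_pmf (\<pi> v) (\<lambda>x. path_pmf (queue_kernel p q v) x n)))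
           = (\<integral>\<^sup>+ x. (\<integral>\<^sup>+ xs. ennreal (\<Sum>t\<le>hit_trunc ?\<theta> n xs. sx (xs ! t)) \<partial>measure_pmf (path_pmf (queue_kernel p q v) x n)) \<partial>measure_pmf (\<pi> v))"
          by (simp add: sx_def)
        also have "\<dots> \<le> (\<integral>\<^sup>+ x. ennreal (H x) \<partial>measure_pmf (\<pi> v))"
          by (rule nn_integral_mono) (rule bd)
        also note EH
        finally show "(\<integral>\<^sup>+ xs. ennreal (\<Sum>t\<le>hit_trunc ?\<theta> n xs. \<Sum>i\<in>UNIV. real ((xs ! t) i)) \<partial>measure_pmf (bind_pmf (\<pi> v) (\<lambda>x. path_pmf (queue_kernel p q v) x n))) \<le> ennreal (cH * (1 + (1 + Q.\<epsilon>) / (1 - Q.lam3)))" .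
      qed
    qed
  qed
  show ?thesis
    apply (rule exI[of _ \<pi>])
    apply (intro conjI)
    apply (rule c1)
    apply (rule c2)
    apply (rule c3)
    apply (rule c4)
    apply (rule c5)
    apply (rule c6)
    done
qed


end
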